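(* Let $\pi$ and $\sigma$ be formal Poisson deformations of $\pi_0$ and $\sigma_0$, and assume $H^1_{\mathrm{CE,der}}(\mathcal{A},\mathcal{B})=\{0\}$. If $X,\overline{X}\in\lambda\mathrm{Der}(\mathcal{B})[[\lambda]]$ are such that both $\exp(X)\phi_0$ and $\exp(\overline{X})\phi_0$ are Poisson morphisms $(\mathcal{A}[[\lambda]],\pi)\to(\mathcal{B}[[\lambda]],\sigma)$, then $\exp(\overline{X})=\exp(X_H)\exp(X)\exp(V)$ for some vertical derivation $V\in\lambda\mathrm{Der}(\mathcal{B})[[\lambda]]$ (i.e. $V\circ\phi_0=0$) and $X_H=\sigma(H,\cdot)$ with $H\in\lambda\mathcal{B}[[\lambda]]$. In particular, any two such solutions are equivalent.
   Context: $\mathbb{K}$ is a field of characteristic zero. $\mathcal{A},\mathcal{B}$ are commutative $\mathbb{K}$-algebras with Poisson brackets $\pi_0=\{\cdot,\cdot\}_{\mathcal{A}}$, $\sigma_0=\{\cdot,\cdot\}_{\mathcal{B}}$, and $\phi_0:\mathcal{A}\to\mathcal{B}$ a Poisson morphism. A formal Poisson deformation of $\pi_0$ is a $\mathbb{K}[[\lambda]]$-bilinear Poisson bracket on $\mathcal{A}[[\lambda]]$ with zeroth-order term $\pi_0$. For $X\in\lambda\mathrm{Der}(\mathcal{B})[[\lambda]]$, $\exp(X)=\sum_nX^n/n!$; maps are extended $\lambda$-linearly. Two solutions $X,\overline{X}$ (derivations with $\exp(\cdot)\phi_0$ a Poisson morphism) are called equivalent if $\exp(\overline{X})=\exp(Y)\exp(X)\exp(V)$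 with $Y,V\in\lambda\mathrm{Der}(\mathcal{B})[[\lambda]]$, $V$ vertical and $Y$ a derivation of the bracket $\sigma$. Chevalley–Eilenberg complex: $C^0_{\mathrm{CE}}(\mathcal{A},\mathcal{B})=\mathcal{B}$, $C^k_{\mathrm{CE}}$ = $k$-linear antisymmetric maps $\mathcal{A}^k\to\mathcal{B}$, $(\delta D)(a_0,\dots,a_k)=\sum_j(-1)^j\{\phi_0(a_j),D(\dots,\widehat{a_j},\dots)\}_{\mathcal{B}}+\sum_{i<j}(-1)^{i+j}D(\{a_i,a_j\}_{\mathcal{A}},\dots,\widehat{a_i},\dots,\widehat{a_j},\dots)$; $C^\bullet_{\mathrm{CE,der}}(\mathcal{A},\mathcal{B})$ is the subcomplex of cochains that are derivations along $\phi_0$ in each argument ($D(\dots,aa',\dots)=\phi_0(a)D(\dots,a',\dots)+D(\dots,a,\dots)\phi_0(a')$), with cohomology $H^\bullet_{\mathrm{CE,der}}(\mathcal{A},\mathcal{B})$. *)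

theory Defs
  imports "HOL-Computational_Algebra.Formal_Power_Series"
begin

text \<open>A commutative K-algebra is modelled as a commutative ring 'a together with its
structure map iota :: 'k => 'a, a unital ring homomorphism from the field K.\<close>

definition alg_struct :: "('k::field \<Rightarrow> 'a::comm_ring_1) \<Rightarrow> bool" where
  "alg_struct \<iota> \<longleftrightarrow> \<iota> 1 = 1 \<and> (\<forall>c d. \<iota> (c + d) = \<iota> c + \<iota> d \<and> \<iota> (c * d) = \<iota> c * \<iota> d)"

definition klinear :: "('k::field \<Rightarrow> 'a::comm_ring_1) \<Rightarrow> ('k \<Rightarrow> 'b::comm_ring_1) \<Rightarrow> ('a \<Rightarrow> 'b) \<Rightarrow> bool" where
  "klinear \<iota>A \<iota>B f \<longleftrightarrow> (\<forall>x y. f (x + y) = f x + f y) \<and> (\<forall>c x. f (\<iota>A c * x) = \<iota>B c * f x)"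

definition kbilinear :: "('k::field \<Rightarrow> 'a::comm_ring_1) \<Rightarrow> ('a \<Rightarrow> 'a \<Rightarrow> 'a) \<Rightarrow> bool" where
  "kbilinear \<iota> p \<longleftrightarrow> (\<forall>x. klinear \<iota> \<iota> (p x)) \<and> (\<forall>y. klinear \<iota> \<iota> (\<lambda>x. p x y))"

definition poisson_axioms :: "('a::comm_ring_1 \<Rightarrow> 'a \<Rightarrow> 'a) \<Rightarrow> bool" where
  "poisson_axioms p \<longleftrightarrow>
     (\<forall>x y. p x y = - p y x) \<and>
     (\<forall>x y z. p x (p y z) + p y (p z x) + p z (p x y) = 0) \<and>
     (\<forall>x y z. p x (y * z) = p x y * z + y * p x z)"

definition poisson_bracket :: "('k::field \<Rightarrow> 'a::comm_ring_1) \<Rightarrow> ('a \<Rightarrow> 'a \<Rightarrow> 'a) \<Rightarrow> bool" where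
  "poisson_bracket \<iota> p \<longleftrightarrow> kbilinear \<iota> p \<and> poisson_axioms p"

definition poisson_morphism ::
  "('k::field \<Rightarrow> 'a::comm_ring_1) \<Rightarrow> ('k \<Rightarrow> 'b::comm_ring_1) \<Rightarrow> ('a \<Rightarrow> 'a \<Rightarrow> 'a) \<Rightarrow> ('b \<Rightarrow> 'b \<Rightarrow> 'b) \<Rightarrow> ('a \<Rightarrow> 'b) \<Rightarrow> bool" where
  "poisson_morphism \<iota>A \<iota>B pA pB \<phi> \<longleftrightarrow> klinear \<iota>A \<iota>B \<phi> \<and> \<phi> 1 = 1 \<and>
     (\<forall>x y. \<phi> (x * y) = \<phi> x * \<phi> y) \<and> (\<forall>x y. \<phi> (pA x y) = pB (\<phi> x) (\<phi> y))"

text \<open>The lambda-bilinear extension of a formal series of bilinear maps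
  p = sum_n lambda^n p_n to A[[lambda]].\<close>
definition ser_bracket :: "(nat \<Rightarrow> 'a::comm_ring_1 \<Rightarrow> 'a \<Rightarrow> 'a) \<Rightarrow> 'a fps \<Rightarrow> 'a fps \<Rightarrow> 'a fps" where
  "ser_bracket p f g = Abs_fps (\<lambda>k. \<Sum>i\<le>k. \<Sum>j\<le>k - i. p i (fps_nth f j) (fps_nth g (k - i - j)))"

definition formal_poisson_deformation ::
  "('k::field \<Rightarrow> 'a::comm_ring_1) \<Rightarrow> ('a \<Rightarrow> 'a \<Rightarrow> 'a) \<Rightarrow> (nat \<Rightarrow> 'a \<Rightarrow> 'a \<Rightarrow> 'a) \<Rightarrow> bool" where
  "formal_poisson_deformation \<iota> p0 p \<longleftrightarrow> p 0 = p0 \<and> (\<forall>n. kbilinear \<iota> (p n)) \<and>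
     poisson_axioms (ser_bracket p)"

definition ser_ext :: "('a \<Rightarrow> 'b) \<Rightarrow> 'a fps \<Rightarrow> 'b fps" where
  "ser_ext \<phi> f = Abs_fps (\<lambda>k. \<phi> (fps_nth f k))"

definition ser_poisson_morphism ::
  "(nat \<Rightarrow> 'a::comm_ring_1 \<Rightarrow> 'a \<Rightarrow> 'a) \<Rightarrow> (nat \<Rightarrow> 'b::comm_ring_1 \<Rightarrow> 'b \<Rightarrow> 'b) \<Rightarrow> ('a fps \<Rightarrow> 'b fps) \<Rightarrow> bool" where
  "ser_poisson_morphism p s F \<longleftrightarrow> (\<forall>f g. F (f + g) = F f + F g) \<and> F 1 = 1 \<and>
     (\<forall>f g. F (f * g) = F f * F g) \<and> (\<forall>f g. F (ser_bracket p f g) = ser_bracket s (F f) (F g))"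

definition is_derivation :: "('k::field \<Rightarrow> 'b::comm_ring_1) \<Rightarrow> ('b \<Rightarrow> 'b) \<Rightarrow> bool" where
  "is_derivation \<iota> D \<longleftrightarrow> klinear \<iota> \<iota> D \<and> (\<forall>x y. D (x * y) = x * D y + D x * y)"

text \<open>Elements of lambda Der(B)[[lambda]]: sequences D_n of derivations with D_0 = 0.\<close>
definition lambda_der :: "('k::field \<Rightarrow> 'b::comm_ring_1) \<Rightarrow> (nat \<Rightarrow> 'b \<Rightarrow> 'b) \<Rightarrow> bool" where
  "lambda_der \<iota> D \<longleftrightarrow> D 0 = (\<lambda>_. 0) \<and> (\<forall>n. is_derivation \<iota> (D n))"

text \<open>Action of sum_n lambda^n D_n on B[[lambda]].\<close>
definition sop_apply :: "(nat \<Rightarrow> 'b::comm_ring_1 \<Rightarrow> 'b) \<Rightarrow> 'b fps \<Rightarrow> 'b fps" where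
  "sop_apply D f = Abs_fps (\<lambda>k. \<Sum>i\<le>k. D i (fps_nth f (k - i)))"

text \<open>exp(D) = sum_n D^n / n!. For D_0 = 0 the operator D^n raises the lambda-order by n,
  so the k-th coefficient only receives contributions from n \<le> k.\<close>
definition sop_exp :: "('k::field_char_0 \<Rightarrow> 'b::comm_ring_1) \<Rightarrow> (nat \<Rightarrow> 'b \<Rightarrow> 'b) \<Rightarrow> 'b fps \<Rightarrow> 'b fps" where
  "sop_exp \<iota> D f = Abs_fps (\<lambda>k. \<Sum>n\<le>k. \<iota> (1 / fact n) * (fps_nth (((sop_apply D) ^^ n) f) k))"

definition vertical :: "('a \<Rightarrow> 'b::zero) \<Rightarrow> (nat \<Rightarrow> 'b \<Rightarrow> 'b) \<Rightarrow> bool" where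
  "vertical \<phi> V \<longleftrightarrow> (\<forall>n a. V n (\<phi> a) = 0)"

text \<open>Hamiltonian series X_H = sigma(H, .), as a series of maps B -> B.\<close>
definition ham_sop :: "(nat \<Rightarrow> 'b::comm_ring_1 \<Rightarrow> 'b \<Rightarrow> 'b) \<Rightarrow> 'b fps \<Rightarrow> nat \<Rightarrow> 'b \<Rightarrow> 'b" where
  "ham_sop s H n b = (\<Sum>i\<le>n. s i (fps_nth H (n - i)) b)"

definition bracket_derivation :: "(nat \<Rightarrow> 'b::comm_ring_1 \<Rightarrow> 'b \<Rightarrow> 'b) \<Rightarrow> (nat \<Rightarrow> 'b \<Rightarrow> 'b) \<Rightarrow> bool" where
  "bracket_derivation s Y \<longleftrightarrow> (\<forall>f g. sop_apply Y (ser_bracket s f g) =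
      ser_bracket s (sop_apply Y f) g + ser_bracket s f (sop_apply Y g))"

definition is_solution ::
  "('k::field_char_0 \<Rightarrow> 'b::comm_ring_1) \<Rightarrow> (nat \<Rightarrow> 'a::comm_ring_1 \<Rightarrow> 'a \<Rightarrow> 'a) \<Rightarrow> (nat \<Rightarrow> 'b \<Rightarrow> 'b \<Rightarrow> 'b)
     \<Rightarrow> ('a \<Rightarrow> 'b) \<Rightarrow> (nat \<Rightarrow> 'b \<Rightarrow> 'b) \<Rightarrow> bool" where
  "is_solution \<iota>B p s \<phi> X \<longleftrightarrow> lambda_der \<iota>B X \<and>
     ser_poisson_morphism p s (sop_exp \<iota>B X \<circ> ser_ext \<phi>)"

definition equivalent_solutions ::
  "('k::field_char_0 \<Rightarrow> 'b::comm_ring_1) \<Rightarrow> (nat \<Rightarrow> 'b \<Rightarrow> 'b \<Rightarrow> 'b) \<Rightarrow> ('a \<Rightarrow> 'b)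
     \<Rightarrow> (nat \<Rightarrow> 'b \<Rightarrow> 'b) \<Rightarrow> (nat \<Rightarrow> 'b \<Rightarrow> 'b) \<Rightarrow> bool" where
  "equivalent_solutions \<iota>B s \<phi> X Xb \<longleftrightarrow> (\<exists>Y V. lambda_der \<iota>B Y \<and> bracket_derivation s Y \<and>
     lambda_der \<iota>B V \<and> vertical \<phi> V \<and>
     sop_exp \<iota>B Xb = sop_exp \<iota>B Y \<circ> sop_exp \<iota>B X \<circ> sop_exp \<iota>B V)"

text \<open>Chevalley-Eilenberg complex in low degrees (with coefficients in B via phi0).\<close>
definition ce_d0 :: "('b \<Rightarrow> 'b \<Rightarrow> 'b) \<Rightarrow> ('a \<Rightarrow> 'b) \<Rightarrow> 'b \<Rightarrow> 'a \<Rightarrow> 'b" where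
  "ce_d0 pB \<phi> b a = pB (\<phi> a) b"

definition ce_d1 :: "('a \<Rightarrow> 'a \<Rightarrow> 'a) \<Rightarrow> ('b::ab_group_add \<Rightarrow> 'b \<Rightarrow> 'b) \<Rightarrow> ('a \<Rightarrow> 'b) \<Rightarrow> ('a \<Rightarrow> 'b) \<Rightarrow> 'a \<Rightarrow> 'a \<Rightarrow> 'b" where
  "ce_d1 pA pB \<phi> D a0 a1 = pB (\<phi> a0) (D a1) - pB (\<phi> a1) (D a0) - D (pA a0 a1)"

definition ce_der_cochain1 :: "('k::field \<Rightarrow> 'a::comm_ring_1) \<Rightarrow> ('k \<Rightarrow> 'b::comm_ring_1) \<Rightarrow> ('a \<Rightarrow> 'b) \<Rightarrow> ('a \<Rightarrow> 'b) \<Rightarrow> bool" where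
  "ce_der_cochain1 \<iota>A \<iota>B \<phi> D \<longleftrightarrow> klinear \<iota>A \<iota>B D \<and> (\<forall>a a'. D (a * a') = \<phi> a * D a' + D a * \<phi> a')"

definition H1_CE_der_trivial ::
  "('k::field \<Rightarrow> 'a::comm_ring_1) \<Rightarrow> ('k \<Rightarrow> 'b::comm_ring_1) \<Rightarrow> ('a \<Rightarrow> 'a \<Rightarrow> 'a) \<Rightarrow> ('b \<Rightarrow> 'b \<Rightarrow> 'b) \<Rightarrow> ('a \<Rightarrow> 'b) \<Rightarrow> bool" where
  "H1_CE_der_trivial \<iota>A \<iota>B pA pB \<phi> \<longleftrightarrow>
     (\<forall>D. ce_der_cochain1 \<iota>A \<iota>B \<phi> D \<and> ce_d1 pA pB \<phi> D = (\<lambda>_ _. 0) \<longrightarrow> (\<exists>b. D = ce_d0 pB \<phi> b))"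

end

theory Submission
  imports Defs
begin
unbundle fps_syntax

lemma alg0: assumes "alg_struct \<iota>" shows "\<iota> 0 = 0"
proof -
  have "\<iota> (0+0) = \<iota> 0 + \<iota> 0" using assms unfolding alg_struct_def by blast
  thus ?thesis by simp
qed
lemma alg1: "alg_struct \<iota> \<Longrightarrow> \<iota> 1 = 1" by (simp add: alg_struct_def)
lemma algadd: "alg_struct \<iota> \<Longrightarrow> \<iota> (c + d) = \<iota> c + \<iota> d" by (simp add: alg_struct_def)
lemma algmult: "alg_struct \<iota> \<Longrightarrow> \<iota> (c * d) = \<iota> c * \<iota> d" by (simp add: alg_struct_def)
lemma alg_of_nat: "alg_struct \<iota> \<Longrightarrow> \<iota> (of_nat n) = of_nat n"
  by (induct n) (simp_all add: alg0 algadd alg1)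

definition addf :: "('x::ab_group_add \<Rightarrow> 'y::ab_group_add) \<Rightarrow> bool" where
  "addf h \<longleftrightarrow> (\<forall>x y. h (x + y) = h x + h y)"

lemma addfD: "addf h \<Longrightarrow> h (x + y) = h x + h y" by (simp add: addf_def)
lemma addf_0: "addf h \<Longrightarrow> h 0 = 0"
  using addfD[of h 0 0] by simp
lemma addf_diff: "addf h \<Longrightarrow> h (x - y) = h x - h y"
  using addfD[of h "x - y" y] by (simp add: eq_diff_eq)
lemma addf_uminus: "addf h \<Longrightarrow> h (- x) = - h x"
  using addf_diff[of h 0 x] by (simp add: addf_0)
lemma addf_sum: "addf h \<Longrightarrow> h (sum g S) = (\<Sum>i\<in>S. h (g i))"
  by (induct S rule: infinite_finite_induct) (simp_all add: addf_0 addfD)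
lemma addf_comp: "addf h \<Longrightarrow> addf g \<Longrightarrow> addf (h \<circ> g)"
  by (simp add: addf_def)
lemma addf_funpow: fixes h :: "'x::ab_group_add \<Rightarrow> 'x" assumes "addf h" shows "addf (h ^^ n)"
proof (induct n)
  case 0 thus ?case by (simp add: addf_def funpow.simps)
next
  case (Suc n) thus ?case using assms by (simp add: addf_def)
qed
lemma addf_of_nat: "addf h \<Longrightarrow> h (of_nat n * x) = of_nat n * h x"
  for h :: "'x::comm_ring_1 \<Rightarrow> 'y::comm_ring_1"
  by (induct n) (simp_all add: addf_0 addfD distrib_right)

lemma kl_addf: "klinear \<iota>A \<iota>B f \<Longrightarrow> addf f" by (simp add: klinear_def addf_def)
lemma kl_scal: "klinear \<iota>A \<iota>B f \<Longrightarrow> f (\<iota>A c * x) = \<iota>B c * f x" by (simp add: klinear_def)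

definition ordge :: "'b::zero fps \<Rightarrow> nat \<Rightarrow> bool" where
  "ordge f a \<longleftrightarrow> (\<forall>i<a. f $ i = 0)"

lemma ordge_0[simp]: "ordge f 0" by (simp add: ordge_def)
lemma ordge_zero[simp]: "ordge 0 a" by (simp add: ordge_def)
lemma ordge_mono: "ordge f a \<Longrightarrow> b \<le> a \<Longrightarrow> ordge f b" by (simp add: ordge_def)
lemma ordgeD: "ordge f a \<Longrightarrow> i < a \<Longrightarrow> f $ i = 0" by (simp add: ordge_def)
lemma ordge_add: "ordge f a \<Longrightarrow> ordge g a \<Longrightarrow> ordge (f + g) a"
  for f :: "'b::ab_group_add fps" by (simp add: ordge_def)
lemma ordge_diff: "ordge f a \<Longrightarrow> ordge g a \<Longrightarrow> ordge (f - g) a"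
  for f :: "'b::ab_group_add fps" by (simp add: ordge_def)

definition gD :: "(nat \<Rightarrow> 'b::comm_ring_1 \<Rightarrow> 'b) \<Rightarrow> bool" where
  "gD D \<longleftrightarrow> (\<forall>x. D 0 x = 0) \<and> (\<forall>n. addf (D n))"

lemma lambda_der_gD: "lambda_der \<iota> D \<Longrightarrow> gD D"
  unfolding lambda_der_def gD_def is_derivation_def by (auto intro: kl_addf)

lemma sop_nth: "sop_apply D f $ k = (\<Sum>i\<le>k. D i (f $ (k - i)))"
  by (simp add: sop_apply_def)

lemma sop_addf: assumes "gD D" shows "addf (sop_apply D)"
  unfolding addf_def
proof (intro allI)
  fix f g
  show "sop_apply D (f + g) = sop_apply D f + sop_apply D g"
    using assms by (simp add: fps_eq_iff sop_nth gD_def addfD sum.distrib)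
qed

lemma sop_ord: assumes "gD D" "ordge f a" shows "ordge (sop_apply D f) (Suc a)"
  unfolding ordge_def
proof (intro allI impI)
  fix k assume k: "k < Suc a"
  have "D i (f $ (k - i)) = 0" if "i \<le> k" for i
  proof (cases i)
    case 0 thus ?thesis using assms(1) by (simp add: gD_def)
  next
    case (Suc j)
    hence "f $ (k - i) = 0" using assms(2) k that by (simp add: ordge_def)
    thus ?thesis using assms(1) by (simp add: gD_def addf_0)
  qed
  thus "sop_apply D f $ k = 0" by (simp add: sop_nth)
qed

lemma sop_pow_ord: assumes "gD D" "ordge f a" shows "ordge ((sop_apply D ^^ m) f) (a + m)"
  using assms by (induct m) (simp_all add: sop_ord)

lemma sop_X: assumes "gD D" shows "sop_apply D (fps_X * h) = fps_X * sop_apply D h"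
proof (rule fps_ext)
  fix n
  show "sop_apply D (fps_X * h) $ n = (fps_X * sop_apply D h) $ n"
  proof (cases n)
    case 0 thus ?thesis using assms by (simp add: sop_nth gD_def)
  next
    case (Suc m)
    have "sop_apply D (fps_X * h) $ n = (\<Sum>i\<le>m. D i ((fps_X * h) $ (Suc m - i))) + D (Suc m) 0"
      using Suc by (simp add: sop_nth)
    also have "\<dots> = (\<Sum>i\<le>m. D i (h $ (m - i)))"
      using assms by (simp add: gD_def addf_0 Suc_diff_le)
    finally show ?thesis using Suc by (simp add: sop_nth)
  qed
qed

lemma sop_scal: assumes "\<forall>n. klinear \<iota> \<iota> (D n)"
  shows "sop_apply D (fps_const (\<iota> c) * f) = fps_const (\<iota> c) * sop_apply D f"
  using assms by (auto simp add: fps_eq_iff sop_nth kl_scal sum_distrib_left intro!: sum.cong)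


lemma sop_pow_addf: "gD D \<Longrightarrow> addf (sop_apply D ^^ n)"
  by (intro addf_funpow sop_addf)

lemma sop_pow_ord0: "gD D \<Longrightarrow> ordge ((sop_apply D ^^ m) f) m"
  using sop_pow_ord[of D f 0 m] by simp

lemma exp_nth: "sop_exp \<iota> D f $ k = (\<Sum>n\<le>k. \<iota> (1 / fact n) * ((sop_apply D ^^ n) f $ k))"
  by (simp add: sop_exp_def)

lemma exp_trunc: assumes "gD D" "k \<le> N"
  shows "sop_exp \<iota> D f $ k = (\<Sum>n\<le>N. \<iota> (1 / fact n) * ((sop_apply D ^^ n) f $ k))"
  unfolding exp_nth
proof (rule sum.mono_neutral_left)
  show "\<forall>i\<in>{..N} - {..k}. \<iota> (1 / fact i) * ((sop_apply D ^^ i) f $ k) = 0"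
    using sop_pow_ord0[OF assms(1)] by (auto simp: ordge_def)
qed (use assms in auto)

lemma exp_addf: assumes "gD D" shows "addf (sop_exp \<iota> D)"
  unfolding addf_def
proof (intro allI)
  fix f g
  show "sop_exp \<iota> D (f + g) = sop_exp \<iota> D f + sop_exp \<iota> D g"
    using addfD[OF sop_pow_addf[OF assms]]
    by (simp add: fps_eq_iff exp_nth distrib_left sum.distrib)
qed

lemma sop_pow_X: "gD D \<Longrightarrow> (sop_apply D ^^ n) (fps_X * h) = fps_X * (sop_apply D ^^ n) h"
  by (induct n) (simp_all add: sop_X)

lemma exp_X: assumes "gD D" shows "sop_exp \<iota> D (fps_X * h) = fps_X * sop_exp \<iota> D h"
proof (rule fps_ext)
  fix k show "sop_exp \<iota> D (fps_X * h) $ k = (fps_X * sop_exp \<iota> D h) $ k"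
  proof (cases k)
    case 0 thus ?thesis by (simp add: exp_nth sop_pow_X[OF assms])
  next
    case (Suc m)
    have "sop_exp \<iota> D (fps_X * h) $ k = (\<Sum>n\<le>Suc m. \<iota> (1 / fact n) * ((sop_apply D ^^ n) h $ m))"
      using Suc by (simp add: exp_nth sop_pow_X[OF assms])
    also have "\<dots> = sop_exp \<iota> D h $ m" by (rule sym, rule exp_trunc[OF assms]) simp
    finally show ?thesis using Suc by simp
  qed
qed

lemma sop_pow_scal: assumes "\<forall>n. klinear \<iota> \<iota> (D n)"
  shows "(sop_apply D ^^ m) (fps_const (\<iota> c) * f) = fps_const (\<iota> c) * (sop_apply D ^^ m) f"
  by (induct m) (simp_all add: sop_scal[OF assms])

lemma exp_scal: assumes "\<forall>n. klinear \<iota> \<iota> (D n)"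
  shows "sop_exp \<iota> D (fps_const (\<iota> c) * f) = fps_const (\<iota> c) * sop_exp \<iota> D f"
  by (rule fps_ext) (simp only: exp_nth sop_pow_scal[OF assms] fps_mult_left_const_nth sum_distrib_left mult.left_commute)

lemma exp_split: assumes "alg_struct \<iota>"
  shows "sop_exp \<iota> D g $ j = g $ j + (\<Sum>n<j. \<iota> (1 / fact (Suc n)) * ((sop_apply D ^^ Suc n) g $ j))"
  unfolding exp_nth sum.atMost_shift using alg1[OF assms] by simp

lemma exp_U: assumes "alg_struct \<iota>" "gD D" "ordge g a"
  shows "ordge (sop_exp \<iota> D g - g) (Suc a)"
  unfolding ordge_def
proof (intro allI impI)
  fix j assume j: "j < Suc a"
  have "(sop_apply D ^^ Suc n) g $ j = 0" for n
    using sop_pow_ord[OF assms(2,3), of "Suc n"] j by (simp add: ordge_def)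
  thus "(sop_exp \<iota> D g - g) $ j = 0" by (simp add: exp_split[OF assms(1)])
qed

lemma exp_U': assumes "alg_struct \<iota>" "gD D" "ordge g a" "j \<le> a"
  shows "sop_exp \<iota> D g $ j = g $ j"
  using exp_U[OF assms(1-3)] assms(4) by (simp add: ordge_def)

lemma exp_0coef: assumes "alg_struct \<iota>" "gD D" shows "sop_exp \<iota> D g $ 0 = g $ 0"
  using exp_U'[OF assms, of g 0 0] by simp

lemma exp_ordge: assumes "alg_struct \<iota>" "gD D" "ordge g a"
  shows "ordge (sop_exp \<iota> D g) a"
  using exp_U'[OF assms] assms(3) by (simp add: ordge_def)

lemma sopW_ord: assumes "\<forall>i\<le>k. \<forall>x. W i x = 0" "\<forall>n. addf (W n)" "ordge g b"
  shows "ordge (sop_apply W g) (b + Suc k)"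
  unfolding ordge_def
proof (intro allI impI)
  fix j assume j: "j < b + Suc k"
  have "W i (g $ (j - i)) = 0" if "i \<le> j" for i
  proof (cases "i \<le> k")
    case True thus ?thesis using assms(1) by simp
  next
    case False
    hence "g $ (j - i) = 0" using assms(3) j that by (simp add: ordge_def)
    thus ?thesis using assms(2) by (simp add: addf_0)
  qed
  thus "sop_apply W g $ j = 0" by (simp add: sop_nth)
qed

lemma sopW_top: assumes "\<forall>i\<le>k. \<forall>x. W i x = 0"
  shows "sop_apply W g $ Suc k = W (Suc k) (g $ 0)"
  using assms by (simp add: sop_nth)

lemma sop_diff_fun: "sop_apply D' g - sop_apply D g = sop_apply (\<lambda>i x. D' i x - D i x) g"
  by (simp add: fps_eq_iff sop_nth sum_subtractf)

lemma pow_pert: assumes "gD D" "gD D'" "\<forall>i\<le>k. D' i = D i"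
  shows "ordge ((sop_apply D' ^^ m) f - (sop_apply D ^^ m) f) (k + m)"
proof (induct m)
  case 0 thus ?case by simp
next
  case (Suc m)
  let ?W = "\<lambda>i x. D' i x - D i x"
  have W0: "\<forall>i\<le>k. \<forall>x. ?W i x = 0" using assms(3) by simp
  have Wa: "\<forall>n. addf (?W n)" using assms(1,2) unfolding gD_def addf_def by (simp add: algebra_simps)
  have e: "(sop_apply D' ^^ Suc m) f - (sop_apply D ^^ Suc m) f =
     sop_apply D' ((sop_apply D' ^^ m) f - (sop_apply D ^^ m) f) + sop_apply ?W ((sop_apply D ^^ m) f)"
  proof -
    have e1: "sop_apply D' ((sop_apply D' ^^ m) f - (sop_apply D ^^ m) f) = sop_apply D' ((sop_apply D' ^^ m) f) - sop_apply D' ((sop_apply D ^^ m) f)"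
      by (rule addf_diff[OF sop_addf[OF assms(2)]])
    have e2: "sop_apply ?W ((sop_apply D ^^ m) f) = sop_apply D' ((sop_apply D ^^ m) f) - sop_apply D ((sop_apply D ^^ m) f)"
      by (rule sop_diff_fun[symmetric])
    show ?thesis by (simp add: e1 e2)
  qed
  have 1: "ordge (sop_apply D' ((sop_apply D' ^^ m) f - (sop_apply D ^^ m) f)) (k + Suc m)"
    using sop_ord[OF assms(2) Suc] by simp
  have 2: "ordge (sop_apply ?W ((sop_apply D ^^ m) f)) (k + Suc m)"
    using sopW_ord[OF W0 Wa sop_pow_ord0[OF assms(1)], of m f] by (simp add: add.commute)
  show ?case unfolding e using ordge_add[OF 1 2] .
qed

lemma exp_pert: assumes "alg_struct \<iota>" "gD D" "gD D'" "\<forall>i\<le>k. D' i = D i"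
  shows "\<forall>j\<le>k. sop_exp \<iota> D' f $ j = sop_exp \<iota> D f $ j"
    and "sop_exp \<iota> D' f $ Suc k = sop_exp \<iota> D f $ Suc k + (D' (Suc k) (f $ 0) - D (Suc k) (f $ 0))"
proof -
  have d: "sop_exp \<iota> D' f $ j - sop_exp \<iota> D f $ j =
     (\<Sum>n<j. \<iota> (1 / fact (Suc n)) * (((sop_apply D' ^^ Suc n) f - (sop_apply D ^^ Suc n) f) $ j))" for j
    by (simp add: exp_split[OF assms(1)] sum_subtractf algebra_simps)
  show "\<forall>j\<le>k. sop_exp \<iota> D' f $ j = sop_exp \<iota> D f $ j"
  proof (intro allI impI)
    fix j assume j: "j \<le> k"
    have "((sop_apply D' ^^ Suc n) f - (sop_apply D ^^ Suc n) f) $ j = 0" for n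
      using pow_pert[OF assms(2-4), of "Suc n" f] j by (simp add: ordge_def)
    thus "sop_exp \<iota> D' f $ j = sop_exp \<iota> D f $ j" using d[of j] by simp
  qed
  let ?W = "\<lambda>i x. D' i x - D i x"
  have "((sop_apply D' ^^ Suc (Suc n)) f - (sop_apply D ^^ Suc (Suc n)) f) $ Suc k = 0" for n
    using pow_pert[OF assms(2-4), of "Suc (Suc n)" f] by (simp add: ordge_def)
  hence "sop_exp \<iota> D' f $ Suc k - sop_exp \<iota> D f $ Suc k =
     \<iota> (1 / fact (Suc 0)) * ((sop_apply D' f - sop_apply D f) $ Suc k)"
    unfolding d lessThan_Suc_eq_insert_0 by (simp add: sum.reindex)
  also have "\<dots> = D' (Suc k) (f $ 0) - D (Suc k) (f $ 0)"
    using assms(4) alg1[OF assms(1)] by (simp add: sop_diff_fun sopW_top)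
  finally show "sop_exp \<iota> D' f $ Suc k = sop_exp \<iota> D f $ Suc k + (D' (Suc k) (f $ 0) - D (Suc k) (f $ 0))"
    by (simp add: algebra_simps)
qed


lemma leibniz_pow:
  fixes T :: "'b::comm_ring_1 fps \<Rightarrow> 'b fps" and m :: "'b fps \<Rightarrow> 'b fps \<Rightarrow> 'b fps"
  assumes T: "addf T" and md: "\<forall>f g. T (m f g) = m (T f) g + m f (T g)"
  shows "(T^^n) (m f g) = (\<Sum>a\<le>n. of_nat (n choose a) * m ((T^^a) f) ((T^^(n-a)) g))"
proof (induct n)
  case 0 thus ?case by simp
next
  case (Suc n)
  define L where "L a b = m ((T^^a) f) ((T^^b) g)" for a b
  have s1: "(T^^Suc n)(m f g) = (\<Sum>a\<le>n. of_nat (n choose a) * L (Suc a) (n-a))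
      + (\<Sum>a\<le>n. of_nat (n choose a) * L a (Suc n - a))"
  proof -
    have "(T^^Suc n)(m f g) = (\<Sum>a\<le>n. of_nat (n choose a) * T (L a (n - a)))"
      using Suc by (simp add: addf_sum[OF T] addf_of_nat[OF T] L_def)
    also have "\<dots> = (\<Sum>a\<le>n. of_nat (n choose a) * L (Suc a) (n-a) + of_nat (n choose a) * L a (Suc n - a))"
      by (intro sum.cong refl) (simp add: L_def md distrib_left Suc_diff_le)
    finally show ?thesis by (simp add: sum.distrib)
  qed
  have s2: "(\<Sum>a\<le>n. of_nat (n choose a) * L a (Suc n - a)) = L 0 (Suc n) + (\<Sum>a\<le>n. of_nat (n choose Suc a) * L (Suc a) (n - a))"
  proof -
    have "(\<Sum>a\<le>n. of_nat (n choose a) * L a (Suc n - a)) = (\<Sum>a\<le>Suc n. of_nat (n choose a) * L a (Suc n - a))"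
      by (simp add: binomial_eq_0)
    also have "\<dots> = L 0 (Suc n) + (\<Sum>a\<le>n. of_nat (n choose Suc a) * L (Suc a) (n - a))"
      by (subst sum.atMost_Suc_shift) simp
    finally show ?thesis .
  qed
  have s3: "(\<Sum>a\<le>Suc n. of_nat (Suc n choose a) * L a (Suc n - a)) = L 0 (Suc n)
      + (\<Sum>a\<le>n. of_nat (n choose a) * L (Suc a) (n-a)) + (\<Sum>a\<le>n. of_nat (n choose Suc a) * L (Suc a) (n-a))"
    by (subst sum.atMost_Suc_shift) (simp add: distrib_right sum.distrib)
  show ?case using s1 s2 s3 by (simp add: L_def algebra_simps)
qed


lemma coef_binom: fixes \<iota> :: "'k::field_char_0 \<Rightarrow> 'b::comm_ring_1"
  assumes "alg_struct \<iota>" "a \<le> n"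
  shows "\<iota> (1 / fact n) * of_nat (n choose a) = \<iota> (1 / fact a) * \<iota> (1 / fact (n - a))"
proof -
  have eq: "(1 / fact n) * (of_nat (n choose a) :: 'k) = (1 / fact a) * (1 / fact (n - a))"
    using binomial_fact[OF assms(2), where 'a='k] by (simp add: field_simps)
  have "\<iota> (1 / fact n) * of_nat (n choose a) = \<iota> ((1 / fact n) * (of_nat (n choose a)))"
    by (simp only: algmult[OF assms(1)] alg_of_nat[OF assms(1)])
  also have "\<dots> = \<iota> ((1 / fact a) * (1 / fact (n - a)))" using eq by (rule arg_cong)
  also have "\<dots> = \<iota> (1 / fact a) * \<iota> (1 / fact (n - a))" by (simp only: algmult[OF assms(1)])
  finally show ?thesis .
qed

lemma finite_tri: "finite {(a::nat, b::nat). a + b \<le> n}"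
  by (rule finite_subset[of _ "{..n} \<times> {..n}"]) auto

lemma exp_hom:
  fixes \<iota> :: "'k::field_char_0 \<Rightarrow> 'b::comm_ring_1" and m :: "'b fps \<Rightarrow> 'b fps \<Rightarrow> 'b fps"
  assumes \<iota>: "alg_struct \<iota>" and gD: "gD D" and kl: "\<forall>n. klinear \<iota> \<iota> (D n)"
    and ma1: "\<forall>f g h. m (f+g) h = m f h + m g h"
    and ma2: "\<forall>f g h. m f (g+h) = m f g + m f h"
    and ms1: "\<forall>c f g. m (fps_const (\<iota> c) * f) g = fps_const (\<iota> c) * m f g"
    and ms2: "\<forall>c f g. m f (fps_const (\<iota> c) * g) = fps_const (\<iota> c) * m f g"
    and mo: "\<forall>f g a b. ordge f a \<longrightarrow> ordge g b \<longrightarrow> ordge (m f g) (a+b)"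
    and md: "\<forall>f g. sop_apply D (m f g) = m (sop_apply D f) g + m f (sop_apply D g)"
  shows "sop_exp \<iota> D (m f g) = m (sop_exp \<iota> D f) (sop_exp \<iota> D g)"
proof (rule fps_ext)
  fix k
  let ?T = "sop_apply D"
  let ?c = "\<lambda>n. \<iota> (1 / fact n)"
  have m1a: "addf (\<lambda>x. m x h)" for h using ma1 by (simp add: addf_def)
  have m2a: "addf (m h)" for h using ma2 by (simp add: addf_def)
  have loc: "m f1 g1 $ k = m f2 g2 $ k" if "\<forall>i\<le>k. f1 $ i = f2 $ i" "\<forall>i\<le>k. g1 $ i = g2 $ i" for f1 f2 g1 g2
  proof -
    have "m f1 g1 - m f2 g2 = m (f1 - f2) g1 + m f2 (g1 - g2)"
      using addf_diff[OF m1a, of f1 f2 g1] addf_diff[OF m2a, of f2 g1 g2] by simp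
    moreover have "ordge (m (f1 - f2) g1) (Suc k + 0)"
    proof -
      have "ordge (f1 - f2) (Suc k)" using that(1) by (auto simp: ordge_def)
      thus ?thesis using mo ordge_0 by blast
    qed
    moreover have "ordge (m f2 (g1 - g2)) (0 + Suc k)"
    proof -
      have "ordge (g1 - g2) (Suc k)" using that(2) by (auto simp: ordge_def)
      thus ?thesis using mo ordge_0 by blast
    qed
    ultimately have "(m f1 g1 - m f2 g2) $ k = 0" by (simp add: ordge_def)
    thus ?thesis by simp
  qed
  define G where "G a b = ?c a * ?c b * (m ((?T^^a) f) ((?T^^b) g) $ k)" for a b
  have G0: "G a b = 0" if "k < a + b" for a b
  proof -
    have "ordge (m ((?T^^a) f) ((?T^^b) g)) (a + b)"
      using mo sop_pow_ord0[OF gD] by blast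
    thus ?thesis using that by (simp add: G_def ordge_def)
  qed
  define E where "E h = (\<Sum>a\<le>k. fps_const (?c a) * (?T^^a) h)" for h
  have Eag: "\<forall>i\<le>k. E h $ i = sop_exp \<iota> D h $ i" for h
  proof (intro allI impI)
    fix i assume "i \<le> k"
    thus "E h $ i = sop_exp \<iota> D h $ i" using exp_trunc[OF gD, of i k \<iota> h] by (simp add: E_def fps_sum_nth)
  qed
  have "m (sop_exp \<iota> D f) (sop_exp \<iota> D g) $ k = m (E f) (E g) $ k"
    using Eag by (intro loc) simp_all
  also have "m (E f) (E g) = (\<Sum>a\<le>k. \<Sum>b\<le>k. fps_const (?c a) * (fps_const (?c b) * m ((?T^^a) f) ((?T^^b) g)))"
    unfolding E_def addf_sum[OF m1a] addf_sum[OF m2a] using ms1 ms2 by (simp, subst sum.swap, simp add: mult.left_commute)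
  also have "\<dots> $ k = (\<Sum>a\<le>k. \<Sum>b\<le>k. G a b)"
    by (simp add: fps_sum_nth G_def mult.assoc)
  also have "\<dots> = (\<Sum>(a,b)\<in>{..k}\<times>{..k}. G a b)"
    by (simp add: sum.cartesian_product)
  also have "\<dots> = (\<Sum>(a,b)\<in>{(a,b). a + b \<le> k}. G a b)"
    by (rule sum.mono_neutral_right) (auto simp: G0 intro: ccontr)
  finally have lhs: "m (sop_exp \<iota> D f) (sop_exp \<iota> D g) $ k = (\<Sum>(a,b)\<in>{(a,b). a + b \<le> k}. G a b)" .
  have "sop_exp \<iota> D (m f g) $ k = (\<Sum>n\<le>2*k. ?c n * ((?T^^n) (m f g) $ k))"
    by (rule exp_trunc[OF gD]) simp
  also have "\<dots> = (\<Sum>n\<le>2*k. \<Sum>a\<le>n. ?c n * of_nat (n choose a) * (m ((?T^^a) f) ((?T^^(n-a)) g) $ k))"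
    unfolding leibniz_pow[OF sop_addf[OF gD] md]
    by (simp add: fps_sum_nth sum_distrib_left mult.assoc flip: fps_of_nat)
  also have "\<dots> = (\<Sum>n\<le>2*k. \<Sum>a\<le>n. G a (n - a))"
    by (intro sum.cong refl) (simp add: G_def coef_binom[OF \<iota>])
  also have "\<dots> = (\<Sum>(a,b)\<in>{(a,b). a + b \<le> 2*k}. G a b)"
    by (rule sum.triangle_reindex_eq[symmetric])
  also have "\<dots> = (\<Sum>(a,b)\<in>{(a,b). a + b \<le> k}. G a b)"
    by (rule sum.mono_neutral_right) (auto simp: G0 finite_tri intro: ccontr)
  finally show "sop_exp \<iota> D (m f g) $ k = m (sop_exp \<iota> D f) (sop_exp \<iota> D g) $ k"
    using lhs by simp
qed


subsection \<open>Products\<close>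

lemma mult_loc: assumes "\<forall>i\<le>n. f $ i = f' $ i" shows "(f * g) $ n = (f' * g) $ n"
  using assms by (simp add: fps_mult_nth)

lemma mult_loc2: assumes "\<forall>i\<le>n. g $ i = g' $ i" shows "(f * g) $ n = (f * g') $ n"
  using assms by (simp add: fps_mult_nth)

lemma mult_ord: fixes f :: "'b::comm_ring_1 fps"
  assumes "ordge f a" "ordge g b" shows "ordge (f * g) (a + b)"
  unfolding ordge_def
proof (intro allI impI)
  fix j assume j: "j < a + b"
  have "f $ i * g $ (j - i) = 0" if "i \<in> {0..j}" for i
  proof (cases "i < a")
    case True thus ?thesis using assms(1) by (simp add: ordge_def)
  next
    case False thus ?thesis using assms(2) j that by (simp add: ordge_def)
  qed
  thus "(f * g) $ j = 0" by (simp add: fps_mult_nth)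
qed

lemma serext_nth: "ser_ext d f $ k = d (f $ k)" by (simp add: ser_ext_def)

lemma serext_leib: assumes "is_derivation \<iota> d"
  shows "ser_ext d (f * g) = ser_ext d f * g + f * ser_ext d g"
proof (rule fps_ext)
  fix n
  have a: "addf d" using assms unfolding is_derivation_def by (blast intro: kl_addf)
  have l: "d (x * y) = x * d y + d x * y" for x y using assms by (simp add: is_derivation_def)
  show "ser_ext d (f * g) $ n = (ser_ext d f * g + f * ser_ext d g) $ n"
    by (simp add: serext_nth fps_mult_nth addf_sum[OF a] l sum.distrib add.commute)
qed

lemma sop_as_sum: assumes "gD D" "n \<le> N"
  shows "sop_apply D f $ n = (\<Sum>i\<le>N. fps_X ^ i * ser_ext (D i) f) $ n"
proof -
  have "(\<Sum>i\<le>N. fps_X ^ i * ser_ext (D i) f) $ n = (\<Sum>i\<le>N. (fps_X ^ i * ser_ext (D i) f) $ n)"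
    by (simp add: fps_sum_nth)
  also have "\<dots> = (\<Sum>i\<le>N. if n < i then 0 else D i (f $ (n - i)))"
    by (intro sum.cong refl) (simp add: fps_X_power_mult_nth serext_nth)
  also have "\<dots> = (\<Sum>i\<le>n. if n < i then 0 else D i (f $ (n - i)))"
    by (rule sum.mono_neutral_right) (use assms in auto)
  also have "\<dots> = sop_apply D f $ n" by (simp add: sop_nth)
  finally show ?thesis by simp
qed

lemma sop_leib: assumes "lambda_der \<iota> D"
  shows "sop_apply D (f * g) = sop_apply D f * g + f * sop_apply D g"
proof (rule fps_ext)
  fix n
  have gD: "gD D" using assms by (rule lambda_der_gD)
  define P where "P h = (\<Sum>i\<le>n. fps_X ^ i * ser_ext (D i) h)" for h
  have Pag: "\<forall>i\<le>n. P h $ i = sop_apply D h $ i" for h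
    using sop_as_sum[OF gD] by (simp add: P_def)
  have sl: "ser_ext (D i) (f * g) = ser_ext (D i) f * g + f * ser_ext (D i) g" for i
    using assms unfolding lambda_der_def by (intro serext_leib[of \<iota>]) simp
  have "P (f * g) = P f * g + f * P g"
    unfolding P_def sl
    by (simp add: sum_distrib_left sum_distrib_right sum.distrib algebra_simps)
  hence "sop_apply D (f * g) $ n = (P f * g) $ n + (f * P g) $ n"
    using Pag[of "f * g"] by simp
  also have "\<dots> = (sop_apply D f * g) $ n + (f * sop_apply D g) $ n"
    using mult_loc[OF Pag[of f]] mult_loc2[OF Pag[of g]] by simp
  finally show "sop_apply D (f * g) $ n = (sop_apply D f * g + f * sop_apply D g) $ n" by simp
qed

lemma lambda_der_kl: "lambda_der \<iota> D \<Longrightarrow> \<forall>n. klinear \<iota> \<iota> (D n)"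
  by (simp add: lambda_der_def is_derivation_def)

lemma exp_mult: assumes "alg_struct \<iota>" "lambda_der \<iota> D"
  shows "sop_exp \<iota> D (f * g) = sop_exp \<iota> D f * sop_exp \<iota> D g"
  by (rule exp_hom[OF assms(1) lambda_der_gD[OF assms(2)] lambda_der_kl[OF assms(2)]])
     (auto simp: algebra_simps mult_ord sop_leib[OF assms(2)])


subsection \<open>Series brackets\<close>

lemma kb1: "kbilinear \<iota> p \<Longrightarrow> klinear \<iota> \<iota> (p x)" by (simp add: kbilinear_def)
lemma kb2: "kbilinear \<iota> p \<Longrightarrow> klinear \<iota> \<iota> (\<lambda>x. p x y)" by (simp add: kbilinear_def)
lemma kb_z1: "kbilinear \<iota> p \<Longrightarrow> p 0 y = 0" using kl_addf[OF kb2, THEN addf_0] by fastforce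
lemma kb_z2: "kbilinear \<iota> p \<Longrightarrow> p x 0 = 0" using kl_addf[OF kb1, THEN addf_0] by fastforce
lemma kb_add1: "kbilinear \<iota> p \<Longrightarrow> p (x + x') y = p x y + p x' y" using kl_addf[OF kb2, THEN addfD] by fastforce
lemma kb_add2: "kbilinear \<iota> p \<Longrightarrow> p x (y + y') = p x y + p x y'" using kl_addf[OF kb1, THEN addfD] by fastforce
lemma kb_diff1: "kbilinear \<iota> p \<Longrightarrow> p (x - x') y = p x y - p x' y" using kl_addf[OF kb2, THEN addf_diff] by fastforce
lemma kb_diff2: "kbilinear \<iota> p \<Longrightarrow> p x (y - y') = p x y - p x y'" using kl_addf[OF kb1, THEN addf_diff] by fastforce
lemma kb_uminus1: "kbilinear \<iota> p \<Longrightarrow> p (- x) y = - p x y" using kl_addf[OF kb2, THEN addf_uminus] by fastforce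
lemma kb_scal1: "kbilinear \<iota> p \<Longrightarrow> p (\<iota> c * x) y = \<iota> c * p x y" using kl_scal[OF kb2] by fastforce
lemma kb_scal2: "kbilinear \<iota> p \<Longrightarrow> p x (\<iota> c * y) = \<iota> c * p x y" using kl_scal[OF kb1] by fastforce

lemma kbs: assumes "\<forall>n. kbilinear \<iota> (s n)"
  shows "s i 0 y = 0" "s i x 0 = 0" "s i (x + x') y = s i x y + s i x' y" "s i x (y + y') = s i x y + s i x y'"
    "s i (x - x') y = s i x y - s i x' y" "s i x (y - y') = s i x y - s i x y'"
    "s i (- x) y = - s i x y" "s i (\<iota> c * x) y = \<iota> c * s i x y" "s i x (\<iota> c * y) = \<iota> c * s i x y"
  using assms[rule_format, of i] by (simp_all add: kb_z1 kb_z2 kb_add1 kb_add2 kb_diff1 kb_diff2 kb_uminus1 kb_scal1 kb_scal2)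

lemma sb_nth: "ser_bracket s f g $ k = (\<Sum>i\<le>k. \<Sum>j\<le>k-i. s i (f $ j) (g $ (k-i-j)))"
  by (simp add: ser_bracket_def)

lemma sb_add1: assumes "\<forall>n. kbilinear \<iota> (s n)"
  shows "ser_bracket s (f + g) h = ser_bracket s f h + ser_bracket s g h"
  using assms by (simp add: fps_eq_iff sb_nth kbs[OF assms] sum.distrib)

lemma sb_add2: assumes "\<forall>n. kbilinear \<iota> (s n)"
  shows "ser_bracket s f (g + h) = ser_bracket s f g + ser_bracket s f h"
  using assms by (simp add: fps_eq_iff sb_nth kbs[OF assms] sum.distrib)

lemma sb_scal1: assumes "\<forall>n. kbilinear \<iota> (s n)"
  shows "ser_bracket s (fps_const (\<iota> c) * f) g = fps_const (\<iota> c) * ser_bracket s f g"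
  using assms by (simp add: fps_eq_iff sb_nth kbs[OF assms] sum_distrib_left)

lemma sb_scal2: assumes "\<forall>n. kbilinear \<iota> (s n)"
  shows "ser_bracket s f (fps_const (\<iota> c) * g) = fps_const (\<iota> c) * ser_bracket s f g"
  using assms by (simp add: fps_eq_iff sb_nth kbs[OF assms] sum_distrib_left)

lemma sb_ord: assumes "\<forall>n. kbilinear \<iota> (s n)" "ordge f a" "ordge g b"
  shows "ordge (ser_bracket s f g) (a + b)"
  unfolding ordge_def
proof (intro allI impI)
  fix k assume k: "k < a + b"
  have "s i (f $ j) (g $ (k-i-j)) = 0" if "i \<le> k" "j \<le> k - i" for i j
  proof (cases "j < a")
    case True thus ?thesis using assms(2) by (simp add: ordge_def kbs[OF assms(1)])
  next
    case False
    hence "k - i - j < b" using k that by linarith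
    thus ?thesis using assms(3) by (simp add: ordge_def kbs[OF assms(1)])
  qed
  thus "ser_bracket s f g $ k = 0" by (simp add: sb_nth)
qed

lemma sb_uminus2: assumes "\<forall>n. kbilinear \<iota> (s n)"
  shows "ser_bracket s f (- g) = - ser_bracket s f g"
proof -
  have "addf (ser_bracket s f)" using sb_add2[OF assms] by (simp add: addf_def)
  thus ?thesis by (rule addf_uminus)
qed

lemma ham_eq: "sop_apply (ham_sop s H) f = ser_bracket s H f"
proof (rule fps_ext)
  fix k
  define g where "g i j = s i (H $ j) (f $ (k - (i + j)))" for i j
  have "sop_apply (ham_sop s H) f $ k = (\<Sum>m\<le>k. \<Sum>i\<le>m. g i (m - i))"
    by (simp add: sop_nth ham_sop_def g_def sum_distrib_left)
  also have "\<dots> = (\<Sum>(i,j)\<in>{(i,j). i + j \<le> k}. g i j)"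
    by (rule sum.triangle_reindex_eq[symmetric])
  also have "{(i,j). i + j \<le> k} = Sigma {..k} (\<lambda>i. {..k-i})" by auto
  also have "(\<Sum>(i,j)\<in>Sigma {..k} (\<lambda>i. {..k-i}). g i j) = (\<Sum>i\<le>k. \<Sum>j\<le>k-i. g i j)"
    by (simp add: sum.Sigma)
  also have "\<dots> = ser_bracket s H f $ k"
    by (simp add: sb_nth g_def diff_diff_left)
  finally show "sop_apply (ham_sop s H) f $ k = ser_bracket s H f $ k" .
qed

lemma ham_const: assumes "\<forall>n. kbilinear \<iota> (s n)"
  shows "ham_sop s H n b = ser_bracket s H (fps_const b) $ n"
proof -
  have "ser_bracket s H (fps_const b) $ n = (\<Sum>i\<le>n. \<Sum>j\<le>n-i. if j = n - i then s i (H $ j) b else 0)"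
    unfolding sb_nth by (intro sum.cong refl) (auto simp: kbs[OF assms])
  also have "\<dots> = ham_sop s H n b" by (simp add: ham_sop_def)
  finally show ?thesis by simp
qed

lemma ham_lambda_der: assumes "\<forall>n. kbilinear \<iota> (s n)" "poisson_axioms (ser_bracket s)" "H $ 0 = 0"
  shows "lambda_der \<iota> (ham_sop s H)"
  unfolding lambda_der_def is_derivation_def
proof (intro conjI allI)
  show "ham_sop s H 0 = (\<lambda>_. 0)" using assms(3) by (simp add: ham_sop_def kbs[OF assms(1)] fun_eq_iff)
  fix n
  show "klinear \<iota> \<iota> (ham_sop s H n)"
    by (simp add: klinear_def ham_sop_def kbs[OF assms(1)] sum.distrib sum_distrib_left)
  fix x y
  have "ser_bracket s H (fps_const x * fps_const y) = ser_bracket s H (fps_const x) * fps_const y + fps_const x * ser_bracket s H (fps_const y)"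
    using assms(2) unfolding poisson_axioms_def by blast
  hence "ser_bracket s H (fps_const (x * y)) $ n = (ser_bracket s H (fps_const x) * fps_const y + fps_const x * ser_bracket s H (fps_const y)) $ n"
    by simp
  thus "ham_sop s H n (x * y) = x * ham_sop s H n y + ham_sop s H n x * y"
    by (simp add: ham_const[OF assms(1)] algebra_simps)
qed

lemma abc0: fixes a :: "'x::ab_group_add" assumes "a + b + c = 0" shows "a = - b - c"
proof -
  have "a = (a + b + c) - b - c" by (simp add: algebra_simps)
  thus ?thesis using assms by simp
qed

lemma ham_bd: assumes "\<forall>n. kbilinear \<iota> (s n)" "poisson_axioms (ser_bracket s)"
  shows "bracket_derivation s (ham_sop s H)"
  unfolding bracket_derivation_def ham_eq
proof (intro allI)
  fix f g
  let ?p = "ser_bracket s"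
  have as: "?p x y = - ?p y x" for x y using assms(2) unfolding poisson_axioms_def by blast
  have ja: "?p H (?p f g) + ?p f (?p g H) + ?p g (?p H f) = 0" using assms(2) unfolding poisson_axioms_def by blast
  have "?p f (?p g H) = - ?p f (?p H g)" unfolding as[of g H] by (rule sb_uminus2[OF assms(1)])
  moreover have "?p g (?p H f) = - ?p (?p H f) g" by (rule as)
  moreover have "?p H (?p f g) = - ?p f (?p g H) - ?p g (?p H f)" using ja by (rule abc0)
  ultimately show "?p H (?p f g) = ?p (?p H f) g + ?p f (?p H g)"
    by (simp add: add.commute)
qed


subsection \<open>Good operators\<close>

definition opgood :: "('k::field_char_0 \<Rightarrow> 'b::comm_ring_1) \<Rightarrow> ('b fps \<Rightarrow> 'b fps) \<Rightarrow> bool" where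
  "opgood \<iota> T \<longleftrightarrow> addf T \<and> (\<forall>h. T (fps_X * h) = fps_X * T h) \<and> (\<forall>f g. T (f * g) = T f * T g)
     \<and> (\<forall>c f. T (fps_const (\<iota> c) * f) = fps_const (\<iota> c) * T f) \<and> (\<forall>g a. ordge g a \<longrightarrow> ordge (T g - g) (Suc a))"

lemma opgood_exp: assumes "alg_struct \<iota>" "lambda_der \<iota> D" shows "opgood \<iota> (sop_exp \<iota> D)"
  unfolding opgood_def
  using exp_addf[OF lambda_der_gD[OF assms(2)]] exp_X[OF lambda_der_gD[OF assms(2)]]
    exp_mult[OF assms] exp_scal[OF lambda_der_kl[OF assms(2)]] exp_U[OF assms(1) lambda_der_gD[OF assms(2)]]
  by blast

lemma opgood_ordge: fixes T :: "'b::comm_ring_1 fps \<Rightarrow> 'b fps" assumes "opgood \<iota> T" "ordge g a" shows "ordge (T g) a"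
proof -
  have "ordge (T g - g) a" using assms by (meson opgood_def ordge_mono le_SucI order_refl)
  hence "ordge (T g - g + g) a" using assms(2) by (rule ordge_add)
  thus ?thesis by simp
qed

lemma opgood_comp: fixes T S :: "'b::comm_ring_1 fps \<Rightarrow> 'b fps" assumes "opgood \<iota> T" "opgood \<iota> S" shows "opgood \<iota> (T \<circ> S)"
proof -
  have T1: "addf T" "\<And>h. T (fps_X * h) = fps_X * T h" "\<And>f g. T (f*g) = T f * T g"
    "\<And>c f. T (fps_const (\<iota> c) * f) = fps_const (\<iota> c) * T f" using assms(1) unfolding opgood_def by blast+
  have S1: "addf S" "\<And>h. S (fps_X * h) = fps_X * S h" "\<And>f g. S (f*g) = S f * S g"
    "\<And>c f. S (fps_const (\<iota> c) * f) = fps_const (\<iota> c) * S f" using assms(2) unfolding opgood_def by blast+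
  have o: "ordge ((T \<circ> S) g - g) (Suc a)" if g: "ordge g a" for g a
  proof -
    have 1: "ordge (S g - g) (Suc a)" using assms(2) g by (simp add: opgood_def)
    have "ordge (S g) a" using opgood_ordge[OF assms(2) g] .
    hence 2: "ordge (T (S g) - S g) (Suc a)" using assms(1) by (simp add: opgood_def)
    have "(T \<circ> S) g - g = (T (S g) - S g) + (S g - g)" by simp
    thus "ordge ((T \<circ> S) g - g) (Suc a)" using ordge_add[OF 2 1] by simp
  qed
  show ?thesis unfolding opgood_def
  proof (intro conjI allI impI)
    show "addf (T \<circ> S)" using T1(1) S1(1) by (rule addf_comp)
    show "(T \<circ> S) (fps_X * h) = fps_X * (T \<circ> S) h" for h by (simp only: comp_apply S1(2) T1(2))
    show "(T \<circ> S) (f * g) = (T \<circ> S) f * (T \<circ> S) g" for f g by (simp only: comp_apply S1(3) T1(3))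
    show "(T \<circ> S) (fps_const (\<iota> c) * f) = fps_const (\<iota> c) * (T \<circ> S) f" for c f by (simp only: comp_apply S1(4) T1(4))
    show "ordge ((T \<circ> S) g - g) (Suc a)" if "ordge g a" for g a using o[OF that] .
  qed
qed

lemma opgood_low: fixes T :: "'b::comm_ring_1 fps \<Rightarrow> 'b fps" assumes "opgood \<iota> T" "ordge g a" "j \<le> a" shows "T g $ j = g $ j"
proof -
  have "ordge (T g - g) (Suc a)" using assms(1,2) by (simp add: opgood_def)
  thus ?thesis using assms(3) by (simp add: ordge_def)
qed

lemma opgood_0: fixes T :: "'b::comm_ring_1 fps \<Rightarrow> 'b fps" assumes "opgood \<iota> T" shows "T g $ 0 = g $ 0"
  using opgood_low[OF assms ordge_0] by simp

lemma fps_decomp: fixes f :: "'b::comm_ring_1 fps" shows "f = fps_const (f $ 0) + fps_X * Abs_fps (\<lambda>n. f $ Suc n)"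
  by (rule fps_ext) (simp split: nat.split)

lemma top_diff: fixes S :: "'b::comm_ring_1 fps \<Rightarrow> 'b fps" assumes "opgood \<iota> S" "opgood \<iota> T" "\<forall>h. \<forall>j\<le>k. S h $ j = T h $ j"
  shows "S f $ Suc k - T f $ Suc k = S (fps_const (f $ 0)) $ Suc k - T (fps_const (f $ 0)) $ Suc k"
proof -
  define h where "h = Abs_fps (\<lambda>n. f $ Suc n)"
  have f: "f = fps_const (f $ 0) + fps_X * h" unfolding h_def by (rule fps_decomp)
  have "S f = S (fps_const (f $ 0)) + fps_X * S h"
  proof -
    have "S f = S (fps_const (f $ 0)) + S (fps_X * h)"
      using assms(1) unfolding opgood_def by (subst f) (simp only: addfD)
    moreover have "S (fps_X * h) = fps_X * S h" using assms(1) unfolding opgood_def by blast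
    ultimately show ?thesis by simp
  qed
  moreover have "T f = T (fps_const (f $ 0)) + fps_X * T h"
  proof -
    have "T f = T (fps_const (f $ 0)) + T (fps_X * h)"
      using assms(2) unfolding opgood_def by (subst f) (simp only: addfD)
    moreover have "T (fps_X * h) = fps_X * T h" using assms(2) unfolding opgood_def by blast
    ultimately show ?thesis by simp
  qed
  ultimately show ?thesis using assms(3) by simp
qed

lemma sum_ends: fixes g :: "nat \<Rightarrow> 'x::comm_monoid_add"
  assumes "\<forall>i. 0 < i \<and> i < Suc k \<longrightarrow> g i = 0"
  shows "(\<Sum>i\<le>Suc k. g i) = g 0 + g (Suc k)"
proof -
  have "(\<Sum>i\<le>Suc k. g i) = g 0 + (\<Sum>i\<le>k. g (Suc i))" by (rule sum.atMost_Suc_shift)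
  also have "(\<Sum>i\<le>k. g (Suc i)) = (\<Sum>i<k. g (Suc i)) + g (Suc k)"
    by (simp add: lessThan_Suc_atMost[symmetric])
  also have "(\<Sum>i<k. g (Suc i)) = 0" using assms by simp
  finally show ?thesis by simp
qed

lemma sum_first: fixes g :: "nat \<Rightarrow> 'x::comm_monoid_add"
  assumes "\<forall>i. 0 < i \<and> i \<le> n \<longrightarrow> g i = 0"
  shows "(\<Sum>i\<le>n. g i) = g 0"
proof -
  have "(\<Sum>i\<le>n. g i) = g 0 + (\<Sum>i<n. g (Suc i))" by (rule sum.atMost_shift)
  also have "(\<Sum>i<n. g (Suc i)) = 0" using assms by simp
  finally show ?thesis by simp
qed

lemma mult_top_diff: fixes U :: "'b::comm_ring_1 fps"
  assumes "\<forall>i\<le>k. U $ i = U' $ i" "\<forall>i\<le>k. W $ i = W' $ i"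
  shows "(U * W) $ Suc k - (U' * W') $ Suc k = (U $ Suc k - U' $ Suc k) * W $ 0 + U $ 0 * (W $ Suc k - W' $ Suc k)"
proof -
  have "(U * W) $ Suc k - (U' * W') $ Suc k = (\<Sum>i\<le>Suc k. U $ i * W $ (Suc k - i) - U' $ i * W' $ (Suc k - i))"
    by (simp add: fps_mult_nth atLeast0AtMost sum_subtractf)
  also have "\<dots> = (U $ 0 * W $ Suc k - U' $ 0 * W' $ Suc k) + (U $ Suc k * W $ 0 - U' $ Suc k * W' $ 0)"
  proof (subst sum_ends)
    show "\<forall>i. 0 < i \<and> i < Suc k \<longrightarrow> U $ i * W $ (Suc k - i) - U' $ i * W' $ (Suc k - i) = 0"
    proof (intro allI impI)
      fix i assume i: "0 < i \<and> i < Suc k"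
      hence "U $ i = U' $ i" "W $ (Suc k - i) = W' $ (Suc k - i)" using assms by auto
      thus "U $ i * W $ (Suc k - i) - U' $ i * W' $ (Suc k - i) = 0" by simp
    qed
  qed simp
  moreover have "U' $ 0 = U $ 0" "W' $ 0 = W $ 0" using assms by auto
  ultimately show ?thesis by (simp add: algebra_simps)
qed

lemma sb_top_diff: assumes kb: "\<forall>n. kbilinear \<iota> (s n)"
  and "\<forall>i\<le>k. U $ i = U' $ i" "\<forall>i\<le>k. W $ i = W' $ i"
  shows "ser_bracket s U W $ Suc k - ser_bracket s U' W' $ Suc k =
     s 0 (U $ Suc k - U' $ Suc k) (W $ 0) + s 0 (U $ 0) (W $ Suc k - W' $ Suc k)"
proof -
  define t where "t i j = s i (U $ j) (W $ (Suc k - i - j)) - s i (U' $ j) (W' $ (Suc k - i - j))" for i j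
  have tz: "t i j = 0" if "j \<le> k" "Suc k - i - j \<le> k" for i j
  proof -
    have "U $ j = U' $ j" "W $ (Suc k - i - j) = W' $ (Suc k - i - j)" using assms(2,3) that by auto
    thus ?thesis by (simp add: t_def)
  qed
  have "ser_bracket s U W $ Suc k - ser_bracket s U' W' $ Suc k = (\<Sum>i\<le>Suc k. \<Sum>j\<le>Suc k - i. t i j)"
    by (simp add: sb_nth t_def sum_subtractf)
  also have "\<dots> = (\<Sum>j\<le>Suc k - 0. t 0 j)"
  proof (rule sum_first, intro allI impI)
    fix i assume i: "0 < i \<and> i \<le> Suc k"
    show "(\<Sum>j\<le>Suc k - i. t i j) = 0"
    proof (rule sum.neutral, intro ballI)
      fix j assume "j \<in> {..Suc k - i}"
      thus "t i j = 0" using i by (intro tz) auto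
    qed
  qed
  also have "\<dots> = t 0 0 + t 0 (Suc k)"
  proof (simp only: diff_zero, rule sum_ends, intro allI impI)
    fix j assume "0 < j \<and> j < Suc k"
    thus "t 0 j = 0" by (intro tz) auto
  qed
  also have "t 0 0 = s 0 (U $ 0) (W $ Suc k - W' $ Suc k)"
  proof -
    have "U' $ 0 = U $ 0" using assms(2) by auto
    thus ?thesis by (simp add: t_def kbs[OF kb])
  qed
  also have "t 0 (Suc k) = s 0 (U $ Suc k - U' $ Suc k) (W $ 0)"
  proof -
    have "W' $ 0 = W $ 0" using assms(3) by auto
    thus ?thesis by (simp add: t_def kbs[OF kb])
  qed
  finally show ?thesis by (simp add: add.commute)
qed


lemma exp_vert: assumes "alg_struct \<iota>" "gD V" "vertical \<phi> V"
  shows "sop_exp \<iota> V (ser_ext \<phi> f) = ser_ext \<phi> f"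
proof -
  have z: "sop_apply V (ser_ext \<phi> f) = 0"
    using assms(3) by (simp add: fps_eq_iff sop_nth serext_nth vertical_def)
  have p: "(sop_apply V ^^ Suc n) (ser_ext \<phi> f) = 0" for n
  proof (induct n)
    case 0 thus ?case using z by simp
  next
    case (Suc n) thus ?case using addf_0[OF sop_addf[OF assms(2)]] by simp
  qed
  show ?thesis by (rule fps_ext) (simp only: exp_split[OF assms(1)] p, simp)
qed

lemma der_add: assumes "is_derivation \<iota> d1" "is_derivation \<iota> d2" shows "is_derivation \<iota> (\<lambda>x. d1 x + d2 x)"
proof -
  have a: "\<And>x y. d1 (x + y) = d1 x + d1 y" "\<And>c x. d1 (\<iota> c * x) = \<iota> c * d1 x" "\<And>x y. d1 (x * y) = x * d1 y + d1 x * y"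
    using assms(1) unfolding is_derivation_def klinear_def by blast+
  have b: "\<And>x y. d2 (x + y) = d2 x + d2 y" "\<And>c x. d2 (\<iota> c * x) = \<iota> c * d2 x" "\<And>x y. d2 (x * y) = x * d2 y + d2 x * y"
    using assms(2) unfolding is_derivation_def klinear_def by blast+
  show ?thesis unfolding is_derivation_def klinear_def
  proof (intro conjI allI)
    show "d1 (x + y) + d2 (x + y) = d1 x + d2 x + (d1 y + d2 y)" for x y by (simp only: a(1) b(1) add_ac)
    show "d1 (\<iota> c * x) + d2 (\<iota> c * x) = \<iota> c * (d1 x + d2 x)" for c x by (simp only: a(2) b(2) distrib_left)
    show "d1 (x * y) + d2 (x * y) = x * (d1 y + d2 y) + (d1 x + d2 x) * y" for x y by (simp only: a(3) b(3), simp add: algebra_simps)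
  qed
qed

lemma der_diff: assumes "is_derivation \<iota> d1" "is_derivation \<iota> d2" shows "is_derivation \<iota> (\<lambda>x. d1 x - d2 x)"
proof -
  have a: "\<And>x y. d1 (x + y) = d1 x + d1 y" "\<And>c x. d1 (\<iota> c * x) = \<iota> c * d1 x" "\<And>x y. d1 (x * y) = x * d1 y + d1 x * y"
    using assms(1) unfolding is_derivation_def klinear_def by blast+
  have b: "\<And>x y. d2 (x + y) = d2 x + d2 y" "\<And>c x. d2 (\<iota> c * x) = \<iota> c * d2 x" "\<And>x y. d2 (x * y) = x * d2 y + d2 x * y"
    using assms(2) unfolding is_derivation_def klinear_def by blast+
  show ?thesis unfolding is_derivation_def klinear_def
  proof (intro conjI allI)
    show "d1 (x + y) - d2 (x + y) = d1 x - d2 x + (d1 y - d2 y)" for x y by (simp only: a(1) b(1), simp add: algebra_simps)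
    show "d1 (\<iota> c * x) - d2 (\<iota> c * x) = \<iota> c * (d1 x - d2 x)" for c x by (simp only: a(2) b(2) right_diff_distrib)
    show "d1 (x * y) - d2 (x * y) = x * (d1 y - d2 y) + (d1 x - d2 x) * y" for x y by (simp only: a(3) b(3), simp add: algebra_simps)
  qed
qed

lemma der_bracket: assumes "poisson_bracket \<iota> p" shows "is_derivation \<iota> (p h)"
proof -
  have "klinear \<iota> \<iota> (p h)" using assms by (simp add: poisson_bracket_def kbilinear_def)
  moreover have "p h (x * y) = x * p h y + p h x * y" for x y
  proof -
    have "p h (x * y) = p h x * y + x * p h y" using assms unfolding poisson_bracket_def poisson_axioms_def by blast
    thus ?thesis by (simp add: add.commute)
  qed
  ultimately show ?thesis by (simp add: is_derivation_def)
qed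

lemma ham_low: assumes "\<forall>i\<le>k. H' $ i = H $ i" "n \<le> k" shows "ham_sop s H' n = ham_sop s H n"
  using assms by (auto simp: ham_sop_def fun_eq_iff intro!: sum.cong)

lemma ham_pert: assumes kb: "\<forall>n. kbilinear \<iota> (s n)"
  shows "ham_sop s (H + fps_const h * fps_X ^ Suc k) (Suc k) x = ham_sop s H (Suc k) x + s 0 h x"
proof -
  let ?H' = "H + fps_const h * fps_X ^ Suc k"
  have "ham_sop s ?H' (Suc k) x - ham_sop s H (Suc k) x =
     (\<Sum>i\<le>Suc k. s i (?H' $ (Suc k - i)) x - s i (H $ (Suc k - i)) x)"
    by (simp add: ham_sop_def sum_subtractf)
  also have "\<dots> = s 0 (?H' $ (Suc k - 0)) x - s 0 (H $ (Suc k - 0)) x"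
    by (rule sum_first) auto
  also have "\<dots> = s 0 h x" by (simp add: kbs[OF kb])
  finally show ?thesis by (simp add: algebra_simps)
qed


locale setting =
  fixes \<iota>A :: "'k::field_char_0 \<Rightarrow> 'a::comm_ring_1"
    and \<iota>B :: "'k \<Rightarrow> 'b::comm_ring_1"
    and pi0 :: "'a \<Rightarrow> 'a \<Rightarrow> 'a" and sigma0 :: "'b \<Rightarrow> 'b \<Rightarrow> 'b"
    and \<phi>0 :: "'a \<Rightarrow> 'b"
    and pi :: "nat \<Rightarrow> 'a \<Rightarrow> 'a \<Rightarrow> 'a" and sigma :: "nat \<Rightarrow> 'b \<Rightarrow> 'b \<Rightarrow> 'b"
    and X Xb :: "nat \<Rightarrow> 'b \<Rightarrow> 'b"
  assumes A1: "alg_struct \<iota>A" and A2: "alg_struct \<iota>B"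
    and A3: "poisson_bracket \<iota>A pi0" and A4: "poisson_bracket \<iota>B sigma0"
    and A5: "poisson_morphism \<iota>A \<iota>B pi0 sigma0 \<phi>0"
    and A6: "formal_poisson_deformation \<iota>A pi0 pi"
    and A7: "formal_poisson_deformation \<iota>B sigma0 sigma"
    and A8: "H1_CE_der_trivial \<iota>A \<iota>B pi0 sigma0 \<phi>0"
    and A9: "is_solution \<iota>B pi sigma \<phi>0 X"
    and A10: "is_solution \<iota>B pi sigma \<phi>0 Xb"
begin

lemma kbS: "\<forall>n. kbilinear \<iota>B (sigma n)" using A7 by (simp add: formal_poisson_deformation_def)
lemma paS: "poisson_axioms (ser_bracket sigma)" using A7 by (simp add: formal_poisson_deformation_def)
lemma s0: "sigma 0 = sigma0" using A7 by (simp add: formal_poisson_deformation_def)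
lemma p0: "pi 0 = pi0" using A6 by (simp add: formal_poisson_deformation_def)
lemma ldX: "lambda_der \<iota>B X" using A9 by (simp add: is_solution_def)
lemma ldXb: "lambda_der \<iota>B Xb" using A10 by (simp add: is_solution_def)
lemma brX: "sop_exp \<iota>B X (ser_ext \<phi>0 (ser_bracket pi u v)) =
    ser_bracket sigma (sop_exp \<iota>B X (ser_ext \<phi>0 u)) (sop_exp \<iota>B X (ser_ext \<phi>0 v))"
  using A9 unfolding is_solution_def ser_poisson_morphism_def by simp
lemma brXb: "sop_exp \<iota>B Xb (ser_ext \<phi>0 (ser_bracket pi u v)) =
    ser_bracket sigma (sop_exp \<iota>B Xb (ser_ext \<phi>0 u)) (sop_exp \<iota>B Xb (ser_ext \<phi>0 v))"
  using A10 unfolding is_solution_def ser_poisson_morphism_def by simp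
lemma kbS0: "kbilinear \<iota>B sigma0" using A4 by (simp add: poisson_bracket_def)
lemma asym0: "sigma0 x y = - sigma0 y x" using A4 unfolding poisson_bracket_def poisson_axioms_def by blast
lemma phi_kl: "klinear \<iota>A \<iota>B \<phi>0" using A5 by (simp add: poisson_morphism_def)
lemma phi_mult: "\<phi>0 (x * y) = \<phi>0 x * \<phi>0 y" using A5 by (simp add: poisson_morphism_def)
lemma phi_br: "\<phi>0 (pi0 x y) = sigma0 (\<phi>0 x) (\<phi>0 y)" using A5 by (simp add: poisson_morphism_def)

lemma hamld: "H $ 0 = 0 \<Longrightarrow> lambda_der \<iota>B (ham_sop sigma H)"
  by (rule ham_lambda_der[OF kbS paS])

lemma expH_br: assumes "H $ 0 = 0"
  shows "sop_exp \<iota>B (ham_sop sigma H) (ser_bracket sigma f g) =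
     ser_bracket sigma (sop_exp \<iota>B (ham_sop sigma H) f) (sop_exp \<iota>B (ham_sop sigma H) g)"
proof (rule exp_hom[OF A2 lambda_der_gD[OF hamld[OF assms]] lambda_der_kl[OF hamld[OF assms]]])
  show "\<forall>f g h. ser_bracket sigma (f + g) h = ser_bracket sigma f h + ser_bracket sigma g h"
    using sb_add1[OF kbS] by blast
  show "\<forall>f g h. ser_bracket sigma f (g + h) = ser_bracket sigma f g + ser_bracket sigma f h"
    using sb_add2[OF kbS] by blast
  show "\<forall>c f g. ser_bracket sigma (fps_const (\<iota>B c) * f) g = fps_const (\<iota>B c) * ser_bracket sigma f g"
    using sb_scal1[OF kbS] by blast
  show "\<forall>c f g. ser_bracket sigma f (fps_const (\<iota>B c) * g) = fps_const (\<iota>B c) * ser_bracket sigma f g"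
    using sb_scal2[OF kbS] by blast
  show "\<forall>f g a b. ordge f a \<longrightarrow> ordge g b \<longrightarrow> ordge (ser_bracket sigma f g) (a + b)"
    using sb_ord[OF kbS] by blast
  show "\<forall>f g. sop_apply (ham_sop sigma H) (ser_bracket sigma f g) =
      ser_bracket sigma (sop_apply (ham_sop sigma H) f) g + ser_bracket sigma f (sop_apply (ham_sop sigma H) g)"
    using ham_bd[OF kbS paS, of H] unfolding bracket_derivation_def by blast
qed

definition Phi :: "'b fps \<Rightarrow> (nat \<Rightarrow> 'b \<Rightarrow> 'b) \<Rightarrow> 'b fps \<Rightarrow> 'b fps" where
  "Phi H V = sop_exp \<iota>B (ham_sop sigma H) \<circ> sop_exp \<iota>B X \<circ> sop_exp \<iota>B V"

lemma Phi_good: "H $ 0 = 0 \<Longrightarrow> lambda_der \<iota>B V \<Longrightarrow> opgood \<iota>B (Phi H V)"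
  unfolding Phi_def by (intro opgood_comp opgood_exp A2 hamld ldX)

lemma Phi_br: assumes "H $ 0 = 0" "lambda_der \<iota>B V" "vertical \<phi>0 V"
  shows "Phi H V (ser_ext \<phi>0 (ser_bracket pi u v)) = ser_bracket sigma (Phi H V (ser_ext \<phi>0 u)) (Phi H V (ser_ext \<phi>0 v))"
  by (simp add: Phi_def exp_vert[OF A2 lambda_der_gD[OF assms(2)] assms(3)] brX expH_br[OF assms(1)])

lemma Phi_diff: assumes "H $ 0 = 0" "H' $ 0 = 0" "lambda_der \<iota>B V" "lambda_der \<iota>B V'"
  "\<forall>i\<le>k. ham_sop sigma H' i = ham_sop sigma H i" "\<forall>i\<le>k. V' i = V i"
  shows "\<forall>j\<le>k. Phi H' V' f $ j = Phi H V f $ j"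
   and "Phi H' V' f $ Suc k = Phi H V f $ Suc k + (ham_sop sigma H' (Suc k) (f $ 0) - ham_sop sigma H (Suc k) (f $ 0))
          + (V' (Suc k) (f $ 0) - V (Suc k) (f $ 0))"
proof -
  let ?EH = "sop_exp \<iota>B (ham_sop sigma H)"
  let ?EH' = "sop_exp \<iota>B (ham_sop sigma H')"
  let ?EX = "sop_exp \<iota>B X"
  let ?EV = "sop_exp \<iota>B V"
  let ?EV' = "sop_exp \<iota>B V'"
  define g where "g = ?EX (?EV' f)"
  define \<delta> where "\<delta> = ?EV' f - ?EV f"
  have gHX: "opgood \<iota>B (?EH \<circ> ?EX)" by (intro opgood_comp opgood_exp A2 hamld ldX assms(1))
  have e: "Phi H' V' f - Phi H V f = (?EH' g - ?EH g) + (?EH \<circ> ?EX) \<delta>"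
  proof -
    have "(?EH \<circ> ?EX) \<delta> = ?EH (?EX (?EV' f)) - ?EH (?EX (?EV f))"
      using addf_diff[of "?EH \<circ> ?EX"] gHX unfolding \<delta>_def opgood_def by simp
    thus ?thesis by (simp add: Phi_def g_def)
  qed
  note pH = exp_pert[OF A2 lambda_der_gD[OF hamld[OF assms(1)]] lambda_der_gD[OF hamld[OF assms(2)]] assms(5), of g]
  note pV = exp_pert[OF A2 lambda_der_gD[OF assms(3)] lambda_der_gD[OF assms(4)] assms(6), of f]
  have od: "ordge \<delta> (Suc k)" using pV(1) by (auto simp: ordge_def \<delta>_def)
  have dl: "(?EH \<circ> ?EX) \<delta> $ j = \<delta> $ j" if "j \<le> Suc k" for j
    by (rule opgood_low[OF gHX od that])
  have g0: "g $ 0 = f $ 0"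
    using opgood_0[OF opgood_exp[OF A2 ldX]] opgood_0[OF opgood_exp[OF A2 assms(4)]] by (simp add: g_def)
  show "\<forall>j\<le>k. Phi H' V' f $ j = Phi H V f $ j"
  proof (intro allI impI)
    fix j assume j: "j \<le> k"
    have "(Phi H' V' f - Phi H V f) $ j = 0"
      unfolding e using pH(1) j dl[of j] pV(1) by (simp add: \<delta>_def)
    thus "Phi H' V' f $ j = Phi H V f $ j" by simp
  qed
  have "(Phi H' V' f - Phi H V f) $ Suc k = (ham_sop sigma H' (Suc k) (f $ 0) - ham_sop sigma H (Suc k) (f $ 0))
          + (V' (Suc k) (f $ 0) - V (Suc k) (f $ 0))"
    unfolding e using pH(2) dl[of "Suc k"] pV(2) g0 by (simp add: \<delta>_def)
  thus "Phi H' V' f $ Suc k = Phi H V f $ Suc k + (ham_sop sigma H' (Suc k) (f $ 0) - ham_sop sigma H (Suc k) (f $ 0))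
          + (V' (Suc k) (f $ 0) - V (Suc k) (f $ 0))"
    by (simp add: algebra_simps)
qed

definition Inv :: "nat \<Rightarrow> 'b fps \<Rightarrow> (nat \<Rightarrow> 'b \<Rightarrow> 'b) \<Rightarrow> bool" where
  "Inv k H V \<longleftrightarrow> H $ 0 = 0 \<and> lambda_der \<iota>B V \<and> vertical \<phi>0 V \<and>
     (\<forall>f. \<forall>j\<le>k. sop_exp \<iota>B Xb f $ j = Phi H V f $ j)"

lemma ld0: "lambda_der \<iota>B (\<lambda>_ _. 0)"
  by (simp add: lambda_der_def is_derivation_def klinear_def)

lemma Inv0: "Inv 0 0 (\<lambda>_ _. 0)"
  unfolding Inv_def
proof (intro conjI allI impI)
  show "lambda_der \<iota>B (\<lambda>_ _. 0)" by (rule ld0)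
  show "vertical \<phi>0 (\<lambda>_ _. 0)" by (simp add: vertical_def)
  fix f :: "'b fps" and j :: nat assume "j \<le> 0"
  thus "sop_exp \<iota>B Xb f $ j = Phi 0 (\<lambda>_ _. 0) f $ j"
    using opgood_0[OF opgood_exp[OF A2 ldXb]] opgood_0[OF Phi_good[OF _ ld0, of 0]] by simp
qed simp

lemma step: assumes "Inv k H V"
  shows "\<exists>h R'. Inv (Suc k) (H + fps_const h * fps_X ^ Suc k) (V(Suc k := (\<lambda>x. V (Suc k) x + R' x)))"
proof -
  have H0: "H $ 0 = 0" and ldV: "lambda_der \<iota>B V" and vt: "vertical \<phi>0 V"
    and ag: "\<forall>f. \<forall>j\<le>k. sop_exp \<iota>B Xb f $ j = Phi H V f $ j"
    using assms by (simp_all add: Inv_def)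
  let ?Eb = "sop_exp \<iota>B Xb"
  let ?P = "Phi H V"
  have gEb: "opgood \<iota>B ?Eb" by (rule opgood_exp[OF A2 ldXb])
  have gP: "opgood \<iota>B ?P" by (rule Phi_good[OF H0 ldV])
  define R where "R b = ?Eb (fps_const b) $ Suc k - ?P (fps_const b) $ Suc k" for b
  have Rf: "?Eb f $ Suc k - ?P f $ Suc k = R (f $ 0)" for f
    unfolding R_def by (rule top_diff[OF gEb gP ag])
  have Rder: "is_derivation \<iota>B R"
    unfolding is_derivation_def klinear_def
  proof (intro conjI allI)
    fix x y
    have "?Eb (fps_const (x + y)) = ?Eb (fps_const x) + ?Eb (fps_const y)"
      using gEb unfolding opgood_def by (simp add: addfD flip: fps_const_add)
    moreover have "?P (fps_const (x + y)) = ?P (fps_const x) + ?P (fps_const y)"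
      using gP unfolding opgood_def by (simp add: addfD flip: fps_const_add)
    ultimately show "R (x + y) = R x + R y" by (simp add: R_def)
    have m1: "?Eb (fps_const (x * y)) = ?Eb (fps_const x) * ?Eb (fps_const y)"
      using gEb unfolding opgood_def by (simp flip: fps_const_mult)
    have m2: "?P (fps_const (x * y)) = ?P (fps_const x) * ?P (fps_const y)"
      using gP unfolding opgood_def by (simp flip: fps_const_mult)
    have ax: "\<forall>i\<le>k. ?Eb (fps_const x) $ i = ?P (fps_const x) $ i" using ag by simp
    have ay: "\<forall>i\<le>k. ?Eb (fps_const y) $ i = ?P (fps_const y) $ i" using ag by simp
    have "R (x * y) = (R x) * ?Eb (fps_const y) $ 0 + ?Eb (fps_const x) $ 0 * R y"
      unfolding R_def m1 m2 by (rule mult_top_diff[OF ax ay])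
    thus "R (x * y) = x * R y + R x * y"
      using opgood_0[OF gEb] by (simp add: algebra_simps)
  next
    fix c x
    have sE: "\<And>c f. ?Eb (fps_const (\<iota>B c) * f) = fps_const (\<iota>B c) * ?Eb f"
      using gEb unfolding opgood_def by blast
    have sP: "\<And>c f. ?P (fps_const (\<iota>B c) * f) = fps_const (\<iota>B c) * ?P f"
      using gP unfolding opgood_def by blast
    have "?Eb (fps_const (\<iota>B c * x)) = fps_const (\<iota>B c) * ?Eb (fps_const x)"
      by (simp only: fps_const_mult[symmetric] sE)
    moreover have "?P (fps_const (\<iota>B c * x)) = fps_const (\<iota>B c) * ?P (fps_const x)"
      by (simp only: fps_const_mult[symmetric] sP)
    ultimately show "R (\<iota>B c * x) = \<iota>B c * R x" by (simp add: R_def algebra_simps)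
  qed
  have Rphi: "R (\<phi>0 (pi0 a a')) = sigma0 (R (\<phi>0 a)) (\<phi>0 a') + sigma0 (\<phi>0 a) (R (\<phi>0 a'))" for a a'
  proof -
    define u where "u = ser_ext \<phi>0 (fps_const a)"
    define v where "v = ser_ext \<phi>0 (fps_const a')"
    define w where "w = ser_bracket pi (fps_const a) (fps_const a')"
    have w0: "ser_ext \<phi>0 w $ 0 = \<phi>0 (pi0 a a')" by (simp add: w_def serext_nth sb_nth p0)
    have u0: "u $ 0 = \<phi>0 a" "v $ 0 = \<phi>0 a'" by (simp_all add: u_def v_def serext_nth)
    have "R (\<phi>0 (pi0 a a')) = ?Eb (ser_ext \<phi>0 w) $ Suc k - ?P (ser_ext \<phi>0 w) $ Suc k"
      using Rf[of "ser_ext \<phi>0 w"] w0 by simp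
    also have "\<dots> = ser_bracket sigma (?Eb u) (?Eb v) $ Suc k - ser_bracket sigma (?P u) (?P v) $ Suc k"
      unfolding w_def u_def v_def brXb Phi_br[OF H0 ldV vt] ..
    also have "\<dots> = sigma 0 (?Eb u $ Suc k - ?P u $ Suc k) (?Eb v $ 0) + sigma 0 (?Eb u $ 0) (?Eb v $ Suc k - ?P v $ Suc k)"
      by (rule sb_top_diff[OF kbS]) (use ag in simp_all)
    also have "\<dots> = sigma0 (R (\<phi>0 a)) (\<phi>0 a') + sigma0 (\<phi>0 a) (R (\<phi>0 a'))"
      unfolding Rf s0 opgood_0[OF gEb] u0 ..
    finally show ?thesis .
  qed
  have coc: "ce_der_cochain1 \<iota>A \<iota>B \<phi>0 (R \<circ> \<phi>0) \<and> ce_d1 pi0 sigma0 \<phi>0 (R \<circ> \<phi>0) = (\<lambda>_ _. 0)"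
  proof (intro conjI)
    have Rkl: "klinear \<iota>B \<iota>B R" using Rder by (simp add: is_derivation_def)
    show "ce_der_cochain1 \<iota>A \<iota>B \<phi>0 (R \<circ> \<phi>0)"
      unfolding ce_der_cochain1_def
    proof (intro conjI allI)
      show "klinear \<iota>A \<iota>B (R \<circ> \<phi>0)"
        using Rkl phi_kl unfolding klinear_def by simp
      fix a a'
      show "(R \<circ> \<phi>0) (a * a') = \<phi>0 a * (R \<circ> \<phi>0) a' + (R \<circ> \<phi>0) a * \<phi>0 a'"
        using Rder unfolding is_derivation_def by (simp add: phi_mult)
    qed
    show "ce_d1 pi0 sigma0 \<phi>0 (R \<circ> \<phi>0) = (\<lambda>_ _. 0)"
    proof (intro ext)
      fix a0 a1
      have "sigma0 (\<phi>0 a1) (R (\<phi>0 a0)) = - sigma0 (R (\<phi>0 a0)) (\<phi>0 a1)" by (rule asym0)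
      thus "ce_d1 pi0 sigma0 \<phi>0 (R \<circ> \<phi>0) a0 a1 = 0"
        by (simp add: ce_d1_def Rphi)
    qed
  qed
  obtain b where b: "R \<circ> \<phi>0 = ce_d0 sigma0 \<phi>0 b" using A8 coc unfolding H1_CE_der_trivial_def by blast
  have Rb: "R (\<phi>0 a) = sigma0 (\<phi>0 a) b" for a
    using fun_cong[OF b, of a] by (simp add: ce_d0_def)
  define h where "h = - b"
  define R' where "R' x = R x - sigma0 h x" for x
  let ?H' = "H + fps_const h * fps_X ^ Suc k"
  let ?V' = "V(Suc k := (\<lambda>x. V (Suc k) x + R' x))"
  have H'0: "?H' $ 0 = 0" using H0 by simp
  have ldV': "lambda_der \<iota>B ?V'"
    unfolding lambda_der_def
  proof (intro conjI allI)
    show "?V' 0 = (\<lambda>_. 0)" using ldV by (simp add: lambda_der_def)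
    fix n
    show "is_derivation \<iota>B (?V' n)"
    proof (cases "n = Suc k")
      case True
      have "is_derivation \<iota>B R'" unfolding R'_def by (intro der_diff Rder der_bracket A4)
      hence "is_derivation \<iota>B (\<lambda>x. V (Suc k) x + R' x)"
        using ldV by (intro der_add) (simp_all add: lambda_der_def)
      thus ?thesis using True by simp
    next
      case False thus ?thesis using ldV by (simp add: lambda_der_def)
    qed
  qed
  have vt': "vertical \<phi>0 ?V'"
    unfolding vertical_def
  proof (intro allI)
    fix n a
    have "R' (\<phi>0 a) = 0"
    proof -
      have "sigma0 h (\<phi>0 a) = - sigma0 b (\<phi>0 a)" unfolding h_def by (rule kb_uminus1[OF kbS0])
      moreover have "sigma0 (\<phi>0 a) b = - sigma0 b (\<phi>0 a)" by (rule asym0)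
      ultimately show ?thesis by (simp add: R'_def Rb)
    qed
    thus "?V' n (\<phi>0 a) = 0" using vt by (simp add: vertical_def)
  qed
  have hl: "\<forall>i\<le>k. ham_sop sigma ?H' i = ham_sop sigma H i"
    by (intro allI impI ham_low[of k]) auto
  have vl: "\<forall>i\<le>k. ?V' i = V i" by simp
  note PD = Phi_diff[OF H0 H'0 ldV ldV' hl vl]
  have "Inv (Suc k) ?H' ?V'"
    unfolding Inv_def
  proof (intro conjI allI impI H'0 ldV' vt')
    fix f :: "'b fps" and j assume j: "j \<le> Suc k"
    show "sop_exp \<iota>B Xb f $ j = Phi ?H' ?V' f $ j"
    proof (cases "j \<le> k")
      case True
      have "Phi ?H' ?V' f $ j = Phi H V f $ j" using PD(1)[of f] True by blast
      thus ?thesis using ag True by simp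
    next
      case False
      hence jk: "j = Suc k" using j by simp
      have e1: "Phi ?H' ?V' f $ Suc k = ?P f $ Suc k + (ham_sop sigma ?H' (Suc k) (f $ 0) - ham_sop sigma H (Suc k) (f $ 0))
          + (?V' (Suc k) (f $ 0) - V (Suc k) (f $ 0))" by (rule PD(2))
      have e2: "?V' (Suc k) (f $ 0) = V (Suc k) (f $ 0) + R' (f $ 0)" by simp
      have e3: "ham_sop sigma ?H' (Suc k) (f $ 0) = ham_sop sigma H (Suc k) (f $ 0) + sigma0 h (f $ 0)"
        using ham_pert[OF kbS, of H h k "f $ 0"] by (simp only: s0)
      have "Phi ?H' ?V' f $ Suc k = ?P f $ Suc k + sigma0 h (f $ 0) + R' (f $ 0)"
        unfolding e1 e2 e3 by simp
      also have "\<dots> = ?Eb f $ Suc k" using Rf[of f] by (simp add: R'_def algebra_simps)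
      finally show ?thesis using jk by simp
    qed
  qed
  thus ?thesis by blast
qed

definition upd :: "nat \<Rightarrow> 'b fps \<times> (nat \<Rightarrow> 'b \<Rightarrow> 'b) \<Rightarrow> 'b \<times> ('b \<Rightarrow> 'b) \<Rightarrow> 'b fps \<times> (nat \<Rightarrow> 'b \<Rightarrow> 'b)" where
  "upd k s hr = (fst s + fps_const (fst hr) * fps_X ^ Suc k, (snd s)(Suc k := (\<lambda>x. snd s (Suc k) x + snd hr x)))"

definition ch :: "nat \<Rightarrow> 'b fps \<times> (nat \<Rightarrow> 'b \<Rightarrow> 'b) \<Rightarrow> 'b \<times> ('b \<Rightarrow> 'b)" where
  "ch k s = (SOME hr. Inv (Suc k) (fst (upd k s hr)) (snd (upd k s hr)))"

primrec st :: "nat \<Rightarrow> 'b fps \<times> (nat \<Rightarrow> 'b \<Rightarrow> 'b)" where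
  "st 0 = (0, \<lambda>_ _. 0)"
| "st (Suc k) = upd k (st k) (ch k (st k))"

lemma st_inv: "Inv k (fst (st k)) (snd (st k))"
proof (induct k)
  case 0 thus ?case using Inv0 by simp
next
  case (Suc k)
  obtain h R' where "Inv (Suc k) (fst (st k) + fps_const h * fps_X ^ Suc k)
      ((snd (st k))(Suc k := (\<lambda>x. snd (st k) (Suc k) x + R' x)))"
    using step[OF Suc] by blast
  hence "\<exists>hr. Inv (Suc k) (fst (upd k (st k) hr)) (snd (upd k (st k) hr))"
    by (intro exI[of _ "(h, R')"]) (simp add: upd_def)
  hence "Inv (Suc k) (fst (upd k (st k) (ch k (st k)))) (snd (upd k (st k) (ch k (st k))))"
    unfolding ch_def by (rule someI_ex)
  thus ?case by simp
qed

lemma st_stable: assumes "k \<le> j" "i \<le> k"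
  shows "fst (st j) $ i = fst (st k) $ i \<and> snd (st j) i = snd (st k) i"
  using assms(1)
proof (induct j rule: dec_induct)
  case base thus ?case by simp
next
  case (step j)
  have "i \<noteq> Suc j" using step(1) assms(2) by simp
  hence "(fps_const h * fps_X ^ Suc j) $ i = 0" for h by (simp only: fps_mult_left_const_nth fps_X_power_nth) simp
  thus ?case using step(3) \<open>i \<noteq> Suc j\<close> by (simp add: upd_def del: power_Suc)
qed

lemma main_exists:
  "\<exists>V H. lambda_der \<iota>B V \<and> vertical \<phi>0 V \<and> fps_nth H 0 = 0 \<and>
     sop_exp \<iota>B Xb = sop_exp \<iota>B (ham_sop sigma H) \<circ> sop_exp \<iota>B X \<circ> sop_exp \<iota>B V"
proof -
  define Hf where "Hf = Abs_fps (\<lambda>i. fst (st i) $ i)"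
  define Vf where "Vf i = snd (st i) i" for i
  have Hk: "Hf $ i = fst (st k) $ i" if "i \<le> k" for i k
    using st_stable[OF that order_refl] by (simp add: Hf_def)
  have Vk: "Vf i = snd (st k) i" if "i \<le> k" for i k
    using st_stable[OF that order_refl] by (simp add: Vf_def)
  have inv: "fst (st k) $ 0 = 0 \<and> lambda_der \<iota>B (snd (st k)) \<and> vertical \<phi>0 (snd (st k)) \<and>
     (\<forall>f. \<forall>j\<le>k. sop_exp \<iota>B Xb f $ j = Phi (fst (st k)) (snd (st k)) f $ j)" for k
    using st_inv[of k] by (simp add: Inv_def)
  have H0: "Hf $ 0 = 0" using Hk[of 0 0] inv[of 0] by simp
  have ldV: "lambda_der \<iota>B Vf"
    unfolding lambda_der_def
  proof (intro conjI allI)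
    show "Vf 0 = (\<lambda>_. 0)" by (simp add: Vf_def)
    fix n show "is_derivation \<iota>B (Vf n)" using inv[of n] by (simp add: Vf_def lambda_der_def)
  qed
  have vt: "vertical \<phi>0 Vf" using inv by (simp add: vertical_def Vf_def)
  have eq: "sop_exp \<iota>B Xb = Phi Hf Vf"
  proof (intro ext fps_ext)
    fix f k
    have hl: "\<forall>i\<le>k. ham_sop sigma Hf i = ham_sop sigma (fst (st k)) i"
      by (intro allI impI ham_low[of k]) (simp_all add: Hk)
    have vl: "\<forall>i\<le>k. Vf i = snd (st k) i" using Vk by simp
    have "Phi Hf Vf f $ k = Phi (fst (st k)) (snd (st k)) f $ k"
      using Phi_diff(1)[OF _ H0 _ ldV hl vl] inv[of k] by simp
    thus "sop_exp \<iota>B Xb f $ k = Phi Hf Vf f $ k" using inv[of k] by simp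
  qed
  show ?thesis using ldV vt H0 eq unfolding Phi_def by blast
qed

end

theorem proposition3p7:
  fixes \<iota>A :: "'k::field_char_0 \<Rightarrow> 'a::comm_ring_1"
    and \<iota>B :: "'k \<Rightarrow> 'b::comm_ring_1"
    and pi0 :: "'a \<Rightarrow> 'a \<Rightarrow> 'a" and sigma0 :: "'b \<Rightarrow> 'b \<Rightarrow> 'b"
    and \<phi>0 :: "'a \<Rightarrow> 'b"
    and pi :: "nat \<Rightarrow> 'a \<Rightarrow> 'a \<Rightarrow> 'a" and sigma :: "nat \<Rightarrow> 'b \<Rightarrow> 'b \<Rightarrow> 'b"
    and X Xb :: "nat \<Rightarrow> 'b \<Rightarrow> 'b"
  assumes "alg_struct \<iota>A" and "alg_struct \<iota>B"
    and "poisson_bracket \<iota>A pi0" and "poisson_bracket \<iota>B sigma0"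
    and "poisson_morphism \<iota>A \<iota>B pi0 sigma0 \<phi>0"
    and "formal_poisson_deformation \<iota>A pi0 pi"
    and "formal_poisson_deformation \<iota>B sigma0 sigma"
    and "H1_CE_der_trivial \<iota>A \<iota>B pi0 sigma0 \<phi>0"
    and "is_solution \<iota>B pi sigma \<phi>0 X"
    and "is_solution \<iota>B pi sigma \<phi>0 Xb"
  shows "(\<exists>V H. lambda_der \<iota>B V \<and> vertical \<phi>0 V \<and> fps_nth H 0 = 0 \<and>
            sop_exp \<iota>B Xb = sop_exp \<iota>B (ham_sop sigma H) \<circ> sop_exp \<iota>B X \<circ> sop_exp \<iota>B V)
         \<and> equivalent_solutions \<iota>B sigma \<phi>0 X Xb"
proof -
  interpret setting \<iota>A \<iota>B pi0 sigma0 \<phi>0 pi sigma X Xb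
    by (rule setting.intro) (rule assms)+
  obtain V H where VH: "lambda_der \<iota>B V" "vertical \<phi>0 V" "fps_nth H 0 = 0"
    "sop_exp \<iota>B Xb = sop_exp \<iota>B (ham_sop sigma H) \<circ> sop_exp \<iota>B X \<circ> sop_exp \<iota>B V"
    using main_exists by blast
  have "equivalent_solutions \<iota>B sigma \<phi>0 X Xb"
    unfolding equivalent_solutions_def using VH hamld[OF VH(3)] ham_bd[OF kbS paS, of H] by blast
  thus ?thesis using VH by blast
qed

end
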